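(* Let $n\ge3$, $R>0$, $\Omega=B_R\subset\mathbb{R}^n$ the ball centred at $0$. Let $\phi,\psi\in C^2([0,\infty))$ with $\phi>0$ on $[0,\infty)$ and $\psi(s)=s\beta(s)$ for some $\beta\in C^2([0,\infty))$, $\beta>0$. Let $s_0,b,L>0$ and define $G(s)=\int_{s_0}^s\int_{s_0}^\sigma\frac{\phi(\tau)}{\psi(\tau)}\,d\tau\,d\sigma$ ($s>0$), $H(s)=\int_0^s\frac{\sigma\phi(\sigma)}{\psi(\sigma)}\,d\sigma$ ($s\ge0$). Assume $H(s)\le\gamma G(s)+b(s+1)$ for all $s>0$ with some $\gamma\in(0,\frac{n-2}{n})$, and $\frac{s^2}{\psi(s)}\le L(G(s)+s+1)$ for all $s>0$. Fix $m>0$, $M>0$, $B>0$, $\kappa>n-2$, and let $\mathcal{S}$ be the set of all $(u,v)\in C^1(\bar\Omega)\times C^2(\bar\Omega)$ such that $u,v$ are positive and radially symmetric, $\frac{\partial v}{\partial\nu}=0$ on $\partial\Omega$, $\int_\Omega u=m$, $\int_\Omega v\le M$, and $v(x)\le B|x|^{-\kappa}$ for all $x\in\Omega$. Then there exist $\mu=\mu(\gamma)\in(0,2)$ and $C(m)>0$ such that for all $r_0\in(0,R)$ and all $(u,v)\in\mathcal{S}$, $$\int_{B_{r_0}}|\nabla v|^2\le\mu\int_\Omega G(u)+C(m)\Big\{r_0\|\Delta v-v+u\|_{L^2(\Omega)}^2+r_0\Big\|\frac{\phi(u)}{\sqrt{\psi(u)}}\nabla u-\sqrt{\psi(u)}\nabla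 v\Big\|_{L^2(\Omega)}^2+\|v\|_{L^2(\Omega)}^2+1\Big\}.$$
   Context: $B_{r_0}$ denotes the ball of radius $r_0$ centred at $0$. *)

theory Defs
  imports "HOL-Analysis.Analysis"
begin

definition C2_real_on :: "real set \<Rightarrow> (real \<Rightarrow> real) \<Rightarrow> bool" where
  "C2_real_on S f \<longleftrightarrow> (\<exists>f' f''.
     (\<forall>x\<in>S. (f has_real_derivative f' x) (at x within S)) \<and>
     (\<forall>x\<in>S. (f' has_real_derivative f'' x) (at x within S)) \<and>
     continuous_on S f'')"

definition C1_grad_on :: "'a::euclidean_space set \<Rightarrow> ('a \<Rightarrow> real) \<Rightarrow> ('a \<Rightarrow> 'a) \<Rightarrow> bool" where
  "C1_grad_on S f g \<longleftrightarrow>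
     (\<forall>x\<in>S. (f has_derivative (\<lambda>h. g x \<bullet> h)) (at x within S)) \<and> continuous_on S g"

definition C2_grad_on :: "'a::euclidean_space set \<Rightarrow> ('a \<Rightarrow> real) \<Rightarrow> ('a \<Rightarrow> 'a)
    \<Rightarrow> ('a \<Rightarrow> 'a \<Rightarrow> 'a) \<Rightarrow> bool" where
  "C2_grad_on S f g hess \<longleftrightarrow> C1_grad_on S f g \<and>
     (\<forall>b\<in>Basis. C1_grad_on S (\<lambda>x. g x \<bullet> b) (hess b))"

definition laplacian :: "('a::euclidean_space \<Rightarrow> 'a \<Rightarrow> 'a) \<Rightarrow> 'a \<Rightarrow> real" where
  "laplacian hess x = (\<Sum>b\<in>Basis. hess b x \<bullet> b)"

definition radial_on :: "'a::real_normed_vector set \<Rightarrow> ('a \<Rightarrow> real) \<Rightarrow> bool" where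
  "radial_on S f \<longleftrightarrow> (\<forall>x\<in>S. \<forall>y\<in>S. norm x = norm y \<longrightarrow> f x = f y)"

end

theory Submission
  imports Defs
begin


lemma int_cont:
  fixes f :: "'a::euclidean_space \<Rightarrow> real"
  assumes "continuous_on (cball 0 R) f" "S \<subseteq> cball 0 R" "S \<in> sets lebesgue"
  shows "f integrable_on S"
proof -
  have cs: "continuous_on S f" using assms continuous_on_subset by blast
  obtain K where K: "\<forall>x\<in>cball 0 R. norm (f x) \<le> K"
    using compact_imp_bounded[OF compact_continuous_image[OF assms(1) compact_cball]]
    by (auto simp: bounded_iff)
  have Sl: "S \<in> lmeasurable"
    using assms(2,3) by (meson bounded_cball bounded_subset fmeasurableI2 lmeasurable_cball)
  have "f absolutely_integrable_on S"
    apply (rule measurable_bounded_by_integrable_imp_absolutely_integrable[where g="\<lambda>x. K"])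
    using continuous_imp_measurable_on_sets_lebesgue[OF cs assms(3)] assms K Sl
    by (auto intro: integrable_on_const)
  then show ?thesis using absolutely_integrable_on_def by blast
qed


lemma int_w:
  fixes c :: real and n :: nat
  assumes "0 \<le> a" "a \<le> b" "n \<ge> 1"
  shows "((\<lambda>r. real n * c * r^(n-1)) has_integral (c * b^n - c * a^n)) {a..b}"
proof -
  have "((\<lambda>r. c * r^n) has_vector_derivative (real n * c * x^(n-1))) (at x within {a..b})" for x
    unfolding has_real_derivative_iff_has_vector_derivative[symmetric]
    by (auto intro!: derivative_eq_intros)
  then show ?thesis using fundamental_theorem_of_calculus[OF assms(2), of "\<lambda>r. c * r^n"] by simp
qed

lemma polar_step:
  fixes h :: "real \<Rightarrow> real"
  assumes hc: "continuous_on {0..R} h" and ab: "0 \<le> a" "a \<le> b" "b \<le> R"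
    and eps: "\<forall>r\<in>{a..b}. \<bar>h r - h a\<bar> \<le> e"
  defines "c \<equiv> measure lborel (ball (0::'a::euclidean_space) 1)"
  defines "D \<equiv> \<lambda>t. integral (ball (0::'a) t) (\<lambda>x. h (norm x))
            - integral {0..t} (\<lambda>r. real DIM('a) * c * r^(DIM('a)-1) * h r)"
  shows "\<bar>D b - D a\<bar> \<le> 2 * e * (c * b^DIM('a) - c * a^DIM('a))"
proof -
  let ?n = "DIM('a)"
  let ?w = "\<lambda>r. real ?n * c * r^(?n-1)"
  have hn: "continuous_on (cball (0::'a) R) (\<lambda>x. h (norm x))"
    by (rule continuous_on_compose2[OF hc continuous_on_norm_id]) auto
  have intb: "(\<lambda>x. h (norm x)) integrable_on ball (0::'a) t" if "t \<le> R" for t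
    by (rule int_cont[OF hn]) (use that in auto)
  have cb: "measure lborel (ball (0::'a) t) = t^?n * c" if "t \<ge> 0" for t
    using content_ball_conv_unit_ball[OF that] c_def by simp
  define A where "A = ball (0::'a) b - ball 0 a"
  have Al: "A \<in> lmeasurable" unfolding A_def by auto
  have mA: "measure lebesgue A = c * b^?n - c * a^?n"
    unfolding A_def using ab
    by (subst measurable_measure_Diff) (auto simp: cb subset_ball)
  have Aint: "(\<lambda>x. h (norm x)) integrable_on A"
    by (rule int_cont[OF hn]) (use ab in \<open>auto simp: A_def\<close>)
  have phi: "integral (ball (0::'a) b) (\<lambda>x. h (norm x)) - integral (ball (0::'a) a) (\<lambda>x. h (norm x))
      = integral A (\<lambda>x. h (norm x))"
    unfolding A_def using ab
    by (subst integral_setdiff) (auto intro!: intb simp: subset_ball)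
  have constA: "integral A (\<lambda>x. k) = k * (c * b^?n - c * a^?n)" for k
    using lmeasure_integral[OF Al] mA integral_mult_right[of A k "\<lambda>x. 1::real"] by simp
  have e1: "\<bar>integral A (\<lambda>x. h (norm x)) - h a * (c * b^?n - c * a^?n)\<bar> \<le> e * (c * b^?n - c * a^?n)"
  proof -
    have "integral A (\<lambda>x. h (norm x)) - h a * (c * b^?n - c * a^?n)
        = integral A (\<lambda>x. h (norm x) - h a)"
      using constA[of "h a"] integral_diff[OF Aint integrable_on_const[OF Al]] by simp
    also have "\<bar>\<dots>\<bar> \<le> integral A (\<lambda>x. e)"
    proof -
      have "norm (integral A (\<lambda>x. h (norm x) - h a)) \<le> integral A (\<lambda>x. e)"
        apply (rule integral_norm_bound_integral)
        using Aint integrable_on_const[OF Al] apply (auto intro!: integrable_diff)[2]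
        using eps by (auto simp: A_def)
      then show ?thesis by simp
    qed
    finally show ?thesis using constA by simp
  qed
  have wc: "continuous_on {0..R} (\<lambda>r. ?w r * h r)"
    by (intro continuous_intros hc)
  have wint: "(\<lambda>r. ?w r * h r) integrable_on {s..t}" if "0 \<le> s" "t \<le> R" for s t
    by (rule integrable_continuous_interval) (rule continuous_on_subset[OF wc], use that in auto)
  have psi: "integral {0..b} (\<lambda>r. ?w r * h r) - integral {0..a} (\<lambda>r. ?w r * h r)
      = integral {a..b} (\<lambda>r. ?w r * h r)"
    using Henstock_Kurzweil_Integration.integral_combine[where a=0 and c=a and b=b and f="\<lambda>r. ?w r * h r"] ab wint[of 0 b] by simp
  have n1: "?n \<ge> 1" by (simp add: DIM_positive Suc_leI)
  have iw: "integral {a..b} (\<lambda>r. ?w r * k) = k * (c * b^?n - c * a^?n)" for k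
  proof -
    have "((\<lambda>r. ?w r * k) has_integral ((c * b^?n - c * a^?n) * k)) {a..b}"
      using has_integral_mult_left[OF int_w[OF ab(1,2) n1, of c]] by simp
    then have "integral {a..b} (\<lambda>r. ?w r * k) = (c * b^?n - c * a^?n) * k"
      by (rule integral_unique)
    then show ?thesis by (simp add: mult.commute)
  qed
  have hab: "continuous_on {a..b} h" using continuous_on_subset[OF hc] ab by auto
  have wi: "?w integrable_on {a..b}" using int_w[OF ab(1,2) n1, of c] by blast
  have cpos: "c \<ge> 0" unfolding c_def by simp
  have e2: "\<bar>integral {a..b} (\<lambda>r. ?w r * h r) - h a * (c * b^?n - c * a^?n)\<bar> \<le> e * (c * b^?n - c * a^?n)"
  proof -
    have "integral {a..b} (\<lambda>r. ?w r * h r) - h a * (c * b^?n - c * a^?n)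
        = integral {a..b} (\<lambda>r. ?w r * (h r - h a))"
      using iw[of "h a"] integral_diff[OF wint[of a b] integrable_on_mult_left[OF wi, of "h a"]] ab
      by (simp add: algebra_simps)
    also have "\<bar>\<dots>\<bar> \<le> integral {a..b} (\<lambda>r. ?w r * e)"
    proof -
      have "norm (integral {a..b} (\<lambda>r. ?w r * (h r - h a))) \<le> integral {a..b} (\<lambda>r. ?w r * e)"
        apply (rule integral_norm_bound_integral)
        apply (intro integrable_continuous_interval continuous_intros hab)
        apply (intro integrable_continuous_interval continuous_intros hab)
        using eps cpos ab by (auto simp: abs_mult intro!: mult_left_mono)
      then show ?thesis by simp
    qed
    also have "\<dots> = e * (c * b^?n - c * a^?n)" using iw[of e] by (simp only: mult.commute)
    finally show ?thesis .
  qed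
  show ?thesis unfolding D_def using phi psi e1 e2 by linarith
qed

lemma polar:
  fixes h :: "real \<Rightarrow> real"
  assumes hc: "continuous_on {0..R} h" and rho: "0 \<le> \<rho>" "\<rho> \<le> R"
  shows "integral (ball (0::'a::euclidean_space) \<rho>) (\<lambda>x. h (norm x))
     = integral {0..\<rho>} (\<lambda>r. real DIM('a) * measure lborel (ball (0::'a) 1) * r^(DIM('a)-1) * h r)"
proof -
  define c where "c = measure lborel (ball (0::'a) 1)"
  define D where "D = (\<lambda>t. integral (ball (0::'a) t) (\<lambda>x. h (norm x))
            - integral {0..t} (\<lambda>r. real DIM('a) * c * r^(DIM('a)-1) * h r))"
  let ?n = "DIM('a)"
  have cpos: "c \<ge> 0" unfolding c_def by simp
  have D0: "D 0 = 0" unfolding D_def by simp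
  have step: "\<bar>D b - D a\<bar> \<le> 2 * e * (c * b^?n - c * a^?n)"
    if "0 \<le> a" "a \<le> b" "b \<le> R" "\<forall>r\<in>{a..b}. \<bar>h r - h a\<bar> \<le> e" for a b e
    using polar_step[OF hc that] unfolding D_def c_def by simp
  have key: "\<bar>D \<rho>\<bar> \<le> 2 * e * (c * \<rho>^?n)" if e: "e > 0" for e
  proof -
    have "uniformly_continuous_on {0..R} h"
      by (rule compact_uniformly_continuous[OF hc compact_Icc])
    then obtain d where d: "d > 0" and dd: "\<And>x x'. x \<in> {0..R} \<Longrightarrow> x' \<in> {0..R} \<Longrightarrow> dist x' x < d \<Longrightarrow> dist (h x') (h x) < e"
      using e unfolding uniformly_continuous_on_def by metis
    obtain N :: nat where N: "\<rho> / d < real N" using reals_Archimedean2 by blast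
    have Npos: "N > 0"
    proof (rule ccontr)
      assume "\<not> N > 0"
      then have "N = 0" by simp
      moreover have "\<rho> / d \<ge> 0" using d rho by simp
      ultimately show False using N by simp
    qed
    have Nd: "\<rho> / real N < d" using N d Npos rho
      by (smt (verit) divide_less_eq mult.commute of_nat_0_less_iff pos_divide_less_eq)
    define t where "t = (\<lambda>k::nat. real k * \<rho> / real N)"
    have tmono: "0 \<le> t k" "t k \<le> t (Suc k)" "t (Suc k) - t k = \<rho> / real N" for k
      unfolding t_def using rho Npos by (auto simp: divide_simps algebra_simps)
    have tle: "t k \<le> \<rho>" if "k \<le> N" for k
      unfolding t_def using that rho Npos
      by (auto simp: divide_simps) (metis mult.commute mult_right_mono of_nat_le_iff)
    have "\<bar>D (t k)\<bar> \<le> 2 * e * (c * (t k)^?n)" if "k \<le> N" for k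
      using that
    proof (induction k)
      case 0
      then show ?case using D0 cpos e by (simp add: t_def)
    next
      case (Suc k)
      have a: "0 \<le> t k" "t k \<le> t (Suc k)" "t (Suc k) \<le> R"
        using tmono[of k] tle[OF Suc.prems] rho by auto
      have hh: "\<forall>r\<in>{t k..t (Suc k)}. \<bar>h r - h (t k)\<bar> \<le> e"
      proof
        fix r assume r: "r \<in> {t k..t (Suc k)}"
        have "dist r (t k) < d" using r tmono[of k] Nd by (auto simp: dist_real_def)
        then have "dist (h r) (h (t k)) < e" using dd[of "t k" r] r a by auto
        then show "\<bar>h r - h (t k)\<bar> \<le> e" by (simp add: dist_real_def)
      qed
      have st: "\<bar>D (t (Suc k)) - D (t k)\<bar> \<le> 2 * e * (c * t (Suc k) ^ ?n) - 2 * e * (c * t k ^ ?n)"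
        using step[OF a hh] by (simp add: right_diff_distrib)
      from st Suc.IH Suc.prems show ?case by simp
    qed
    from this[of N] show ?thesis using Npos by (simp add: t_def)
  qed
  have "D \<rho> = 0"
  proof (rule ccontr)
    assume ne: "D \<rho> \<noteq> 0"
    define K where "K = c * \<rho>^?n"
    have K: "K \<ge> 0" unfolding K_def using cpos rho by simp
    define e where "e = \<bar>D \<rho>\<bar> / (4 * (K + 1))"
    have e: "e > 0" unfolding e_def using ne K by simp
    have "\<bar>D \<rho>\<bar> \<le> 2 * e * K" using key[OF e] K_def by simp
    also have "\<dots> < \<bar>D \<rho>\<bar>" unfolding e_def using K ne
      by (simp add: field_simps) (simp add: add_pos_nonneg)
    finally show False by simp
  qed
  then show ?thesis unfolding D_def c_def by simp
qed


lemma C1_at: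
  assumes "C1_grad_on (cball 0 R) u du" "norm (x::'a::euclidean_space) < R"
  shows "(u has_derivative (\<lambda>h. du x \<bullet> h)) (at x)"
proof -
  have i: "x \<in> interior (cball 0 R)" using assms(2) by simp
  have eq: "at x within cball 0 R = at x" using i by (rule at_within_interior)
  have "x \<in> cball 0 R" using assms(2) by simp
  then have "(u has_derivative (\<lambda>h. du x \<bullet> h)) (at x within cball 0 R)"
    using assms(1) unfolding C1_grad_on_def by blast
  then show ?thesis unfolding eq .
qed

lemma radial_eq:
  assumes "radial_on (cball 0 R) u" "e \<in> Basis" "norm (x::'a::euclidean_space) \<le> R"
  shows "u x = u (norm x *\<^sub>R e)"
proof -
  have n: "norm (norm x *\<^sub>R e) = norm x" using assms(2) by (simp add: norm_Basis)
  have m: "x \<in> cball 0 R" "norm x *\<^sub>R e \<in> cball 0 R" using assms(3) n by auto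
  have "\<forall>x\<in>cball 0 R. \<forall>y\<in>cball 0 R. norm x = norm y \<longrightarrow> u x = u y"
    using assms(1) unfolding radial_on_def .
  from this[rule_format, OF m n[symmetric]] show ?thesis .
qed

lemma hd_to_real:
  fixes f :: "real \<Rightarrow> real" and d e :: "'a::euclidean_space"
  assumes "(f has_derivative (\<lambda>h. d \<bullet> (h *\<^sub>R e))) (at r)"
  shows "(f has_real_derivative (d \<bullet> e)) (at r)"
proof -
  have "(\<lambda>h. d \<bullet> (h *\<^sub>R e)) = (\<lambda>h. (d \<bullet> e) * h)" by (rule ext) (simp only: inner_scaleR_right mult.commute)
  with assms show ?thesis unfolding has_field_derivative_def by simp
qed

lemma radial_deriv1:
  fixes u :: "'a::euclidean_space \<Rightarrow> real"
  assumes C1: "C1_grad_on (cball 0 R) u du" and e: "e \<in> Basis" and r: "0 \<le> r" "r < R"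
  shows "((\<lambda>s. u (s *\<^sub>R e)) has_real_derivative (du (r *\<^sub>R e) \<bullet> e)) (at r)"
proof -
  have n: "norm (r *\<^sub>R e) < R" using e r by (simp add: norm_Basis)
  have l: "((\<lambda>s. s *\<^sub>R e) has_derivative (\<lambda>h. h *\<^sub>R e)) (at r)"
    by (rule bounded_linear_imp_has_derivative[OF bounded_linear_scaleR_left])
  have "((\<lambda>s. u (s *\<^sub>R e)) has_derivative (\<lambda>h. du (r *\<^sub>R e) \<bullet> (h *\<^sub>R e))) (at r)"
    using has_derivative_compose[OF l C1_at[OF C1 n]] .
  then show ?thesis by (rule hd_to_real[where f="\<lambda>s. u (s *\<^sub>R e)"])
qed


lemma radial_grad:
  fixes u :: "'a::euclidean_space \<Rightarrow> real"
  assumes C1: "C1_grad_on (cball 0 R) u du" and rad: "radial_on (cball 0 R) u"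
    and e: "e \<in> Basis" and x: "x \<noteq> 0" "norm x < R"
  shows "du x = (du (norm x *\<^sub>R e) \<bullet> e) *\<^sub>R sgn x"
proof -
  let ?U = "\<lambda>s. u (s *\<^sub>R e)"
  let ?d = "du (norm x *\<^sub>R e) \<bullet> e"
  have dU: "(?U has_derivative (\<lambda>h. ?d * h)) (at (norm x))"
    using has_field_derivative_imp_has_derivative[OF radial_deriv1[OF C1 e norm_ge_zero x(2)]] .
  have d1: "((\<lambda>y. ?U (norm y)) has_derivative (\<lambda>h. ?d * (h \<bullet> sgn x))) (at x)"
    using has_derivative_compose[OF has_derivative_norm[OF x(1)] dU] .
  have d2: "((\<lambda>y. ?U (norm y)) has_derivative (\<lambda>h. du x \<bullet> h)) (at x)"
  proof (rule has_derivative_transform_within_open[OF C1_at[OF C1 x(2)]])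
    show "open (ball (0::'a) R)" by simp
    show "x \<in> ball 0 R" using x by simp
    fix y :: 'a assume "y \<in> ball 0 R"
    then have "norm y \<le> R" by simp
    then show "u y = ?U (norm y)" by (rule radial_eq[OF rad e])
  qed
  have "(\<lambda>h. ?d * (h \<bullet> sgn x)) = (\<lambda>h. du x \<bullet> h)"
    using has_derivative_unique[OF d1 d2] .
  then have bb: "?d * (b \<bullet> sgn x) = du x \<bullet> b" for b by (rule fun_cong)
  show ?thesis
  proof (rule euclidean_eqI)
    fix b :: 'a
    have "(?d *\<^sub>R sgn x) \<bullet> b = ?d * (sgn x \<bullet> b)" by (rule inner_scaleR_left)
    also have "\<dots> = ?d * (b \<bullet> sgn x)" by (simp only: inner_commute[of b])
    finally show "du x \<bullet> b = (?d *\<^sub>R sgn x) \<bullet> b" using bb[of b] by linarith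
  qed
qed


lemma lap_dir:
  fixes v :: "'a::euclidean_space \<Rightarrow> real"
  assumes C2: "C2_grad_on (cball 0 R) v dv hv" and rad: "radial_on (cball 0 R) v"
    and e: "e \<in> Basis" and b: "b \<in> Basis" and x: "x \<noteq> 0" "norm x < R"
  shows "hv b x \<bullet> b = (hv e (norm x *\<^sub>R e) \<bullet> e) * (x \<bullet> b)^2 / (norm x)^2
     + (dv (norm x *\<^sub>R e) \<bullet> e) * (norm x ^ 2 - (x \<bullet> b)^2) / (norm x)^3"
proof -
  define r where "r = norm x"
  have r: "0 < r" "r < R" using x r_def by auto
  define V1 where "V1 = (\<lambda>s. dv (s *\<^sub>R e) \<bullet> e)"
  define V2 where "V2 = (\<lambda>s. hv e (s *\<^sub>R e) \<bullet> e)"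
  have C1v: "C1_grad_on (cball 0 R) v dv" using C2 unfolding C2_grad_on_def by blast
  have C1b: "C1_grad_on (cball 0 R) (\<lambda>y. dv y \<bullet> c) (hv c)" if "c \<in> Basis" for c
    using C2 that unfolding C2_grad_on_def by blast
  have dV1: "(V1 has_real_derivative V2 r) (at r)"
    using radial_deriv1[OF C1b[OF e] e, of r] r unfolding V1_def V2_def by simp
  let ?N = "\<lambda>t::real. norm (x + t *\<^sub>R b)"
  have bb: "b \<bullet> b = 1" using b by simp
  have l: "((\<lambda>t::real. x + t *\<^sub>R b) has_derivative (\<lambda>h. 0 + h *\<^sub>R b)) (at 0)"
    by (intro has_derivative_add has_derivative_const bounded_linear_imp_has_derivative bounded_linear_scaleR_left)
  have nx: "(norm has_derivative (\<lambda>h. h \<bullet> sgn x)) (at ((\<lambda>t::real. x + t *\<^sub>R b) 0))"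
    using has_derivative_norm[OF x(1)] by simp
  have "(?N has_derivative (\<lambda>h. (0 + h *\<^sub>R b) \<bullet> sgn x)) (at 0)"
    using has_derivative_compose[OF l nx] .
  moreover have "(\<lambda>h::real. (0 + h *\<^sub>R b) \<bullet> sgn x) = (\<lambda>h. (b \<bullet> sgn x) * h)"
    by (rule ext) (simp only: add_0_left inner_scaleR_left mult.commute)
  ultimately have dN: "(?N has_real_derivative (b \<bullet> sgn x)) (at 0)"
    unfolding has_field_derivative_def by simp
  have N0: "?N 0 = r" using r_def by simp
  have dV1N: "((\<lambda>t. V1 (?N t)) has_real_derivative V2 r * (b \<bullet> sgn x)) (at 0)"
    using DERIV_chain2[of V1 "V2 r" ?N 0, OF _ dN] dV1 N0 by simp
  have dnum: "((\<lambda>t::real. x \<bullet> b + t) has_real_derivative 1) (at 0)"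
    by (rule derivative_eq_intros refl)+ simp
  have dq: "((\<lambda>t. (x \<bullet> b + t) / ?N t) has_real_derivative
      ((1 * r - (x \<bullet> b) * (b \<bullet> sgn x)) / (r * r))) (at 0)"
    using DERIV_divide[OF dnum dN] N0 r x(1) by simp
  have dphi: "((\<lambda>t. V1 (?N t) * ((x \<bullet> b + t) / ?N t)) has_real_derivative
      V2 r * (b \<bullet> sgn x) * ((x \<bullet> b) / r) + ((1 * r - (x \<bullet> b) * (b \<bullet> sgn x)) / (r * r)) * V1 r) (at 0)"
    using DERIV_mult[OF dV1N dq] N0 by simp
  have xin: "norm (x + 0 *\<^sub>R b) < R" using x by simp
  have "((\<lambda>t. dv (x + t *\<^sub>R b) \<bullet> b) has_derivative (\<lambda>h. hv b (x + 0 *\<^sub>R b) \<bullet> (0 + h *\<^sub>R b))) (at 0)"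
    using has_derivative_compose[OF l C1_at[OF C1b[OF b] xin]] .
  moreover have "(\<lambda>h::real. hv b (x + 0 *\<^sub>R b) \<bullet> (0 + h *\<^sub>R b)) = (\<lambda>h. (hv b x \<bullet> b) * h)"
    by (rule ext) (simp only: add_0_left scale_zero_left add_0_right inner_scaleR_right mult.commute)
  ultimately have dphi2: "((\<lambda>t. dv (x + t *\<^sub>R b) \<bullet> b) has_real_derivative (hv b x \<bullet> b)) (at 0)"
    unfolding has_field_derivative_def by simp
  define \<delta> where "\<delta> = min r (R - r)"
  have dpos: "\<delta> > 0" using r \<delta>_def by simp
  have dphi3: "((\<lambda>t. V1 (?N t) * ((x \<bullet> b + t) / ?N t)) has_real_derivative (hv b x \<bullet> b)) (at 0)"
  proof (rule has_field_derivative_transform_within_open[OF dphi2])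
    show "open (ball (0::real) \<delta>)" by simp
    show "(0::real) \<in> ball 0 \<delta>" using dpos by simp
    fix t :: real assume t: "t \<in> ball 0 \<delta>"
    let ?y = "x + t *\<^sub>R b"
    have "norm ?y \<le> r + \<bar>t\<bar>" using norm_triangle_ineq[of x "t *\<^sub>R b"] b r_def by simp
    moreover have "norm ?y \<ge> r - \<bar>t\<bar>" using norm_triangle_ineq2[of x "- (t *\<^sub>R b)"] b r_def by simp
    moreover have "\<bar>t\<bar> < \<delta>" using t by simp
    ultimately have y: "norm ?y < R" "norm ?y > 0" using \<delta>_def by auto
    have "dv ?y = V1 (norm ?y) *\<^sub>R sgn ?y"
      unfolding V1_def by (rule radial_grad[OF C1v rad e]) (use y in auto)
    then have "dv ?y \<bullet> b = V1 (norm ?y) * ((?y \<bullet> b) / norm ?y)"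
      by (simp add: sgn_div_norm divide_inverse mult_ac)
    also have "?y \<bullet> b = x \<bullet> b + t" using bb by (simp add: inner_add_left)
    finally show "dv ?y \<bullet> b = V1 (?N t) * ((x \<bullet> b + t) / ?N t)" .
  qed
  have eq: "hv b x \<bullet> b = V2 r * (b \<bullet> sgn x) * ((x \<bullet> b) / r) + ((1 * r - (x \<bullet> b) * (b \<bullet> sgn x)) / (r * r)) * V1 r"
    using DERIV_unique[OF dphi3 dphi] .
  have sg: "b \<bullet> sgn x = (x \<bullet> b) / r" unfolding r_def by (simp add: sgn_div_norm inner_commute divide_inverse mult.commute)
  show ?thesis unfolding eq sg V1_def V2_def r_def[symmetric]
    using r by (simp add: field_simps power2_eq_square power3_eq_cube)
qed

lemma sum_sq_basis: "(\<Sum>b\<in>Basis. (x \<bullet> b)^2) = (norm (x::'a::euclidean_space))^2"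
proof -
  have "(norm x)^2 = x \<bullet> x" by (rule power2_norm_eq_inner)
  also have "\<dots> = (\<Sum>b\<in>Basis. (x \<bullet> b) * (x \<bullet> b))" by (rule euclidean_inner)
  finally show ?thesis by (simp add: power2_eq_square)
qed

lemma radial_lap:
  fixes v :: "'a::euclidean_space \<Rightarrow> real"
  assumes C2: "C2_grad_on (cball 0 R) v dv hv" and rad: "radial_on (cball 0 R) v"
    and e: "e \<in> Basis" and x: "x \<noteq> 0" "norm x < R"
  shows "laplacian hv x = (hv e (norm x *\<^sub>R e) \<bullet> e)
     + (real DIM('a) - 1) * (dv (norm x *\<^sub>R e) \<bullet> e) / norm x"
proof -
  define r where "r = norm x"
  have r: "r > 0" using x r_def by simp
  define A where "A = hv e (norm x *\<^sub>R e) \<bullet> e"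
  define B where "B = dv (norm x *\<^sub>R e) \<bullet> e"
  have "laplacian hv x = (\<Sum>b\<in>Basis. A * (x \<bullet> b)^2 / r^2 + B * (r^2 - (x \<bullet> b)^2) / r^3)"
    unfolding laplacian_def A_def B_def r_def
    by (rule sum.cong[OF refl], rule lap_dir[OF C2 rad e _ x]) 
  also have "\<dots> = A / r^2 * (\<Sum>b\<in>Basis. (x \<bullet> b)^2) + B / r^3 * (\<Sum>b\<in>Basis. r^2 - (x \<bullet> b)^2)"
  proof -
    have "(\<Sum>b\<in>Basis. A * (x \<bullet> b)^2 / r^2 + B * (r^2 - (x \<bullet> b)^2) / r^3)
       = (\<Sum>b\<in>Basis. A / r^2 * (x \<bullet> b)^2 + B / r^3 * (r^2 - (x \<bullet> b)^2))"
      by (intro sum.cong refl) simp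
    then show ?thesis by (simp add: sum.distrib sum_distrib_left)
  qed
  also have "(\<Sum>b\<in>Basis. r^2 - (x \<bullet> b)^2) = real DIM('a) * r^2 - r^2"
    by (simp add: sum_subtractf sum_sq_basis r_def)
  also have "(\<Sum>b\<in>Basis. (x \<bullet> b)^2) = r^2" by (simp add: sum_sq_basis r_def)
  finally have L: "laplacian hv x = A / r^2 * r^2 + B / r^3 * (real DIM('a) * r^2 - r^2)" .
  have "A / r^2 * r^2 + B / r^3 * (real DIM('a) * r^2 - r^2) = A + (real DIM('a) - 1) * B / r"
    using r by (simp add: field_simps power2_eq_square power3_eq_cube)
  with L show ?thesis unfolding A_def B_def r_def by simp
qed


lemma young: assumes "(e::real) > 0" shows "x * y \<le> e * x^2 + y^2 / (4 * e)"
proof -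
  have "0 \<le> (2 * e * x - y)^2 / (4 * e)" using assms by simp
  also have "(2 * e * x - y)^2 / (4 * e) = e * x^2 + y^2 / (4 * e) - x * y"
    using assms by (simp add: field_simps power2_eq_square)
  finally show ?thesis by simp
qed

lemma alg_identity:
  fixes r u bt s N w a c V u1 ph Hu :: real
  assumes "r > 0" "u > 0" "bt > 0" "s = sqrt (u * bt)"
  shows "(N - 2) / 2 * w * a^2 = (c + (N - 1) * a / r - V + u) * (r * w) * a + (r * w) * V * a
    + (r * w) * (u / s) * (ph / s * u1 - s * a) + N * w * Hu
    - (N / 2 * w * a^2 + r * w * a * c) - (N * w * Hu + (r * w) * (ph / bt) * u1)"
proof -
  have sp: "s > 0" using assms by simp
  have "0 \<le> u * bt" using assms by simp
  then have ss: "s * s = u * bt" using assms(4) by simp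
  have q1: "(r * w) * (u / s) * (ph / s * u1) = (r * w) * (ph / bt) * u1"
    using sp ss assms by (simp add: field_simps)
  have q2: "(r * w) * (u / s) * (s * a) = r * w * u * a" using sp by simp
  have e1: "(r * w) * (u / s) * (ph / s * u1 - s * a) = (r * w) * (ph / bt) * u1 - r * w * u * a"
    using q1 q2 by (simp only: right_diff_distrib)
  show ?thesis unfolding e1 using assms(1) by (simp add: field_simps power2_eq_square)
qed

lemma young_w:
  fixes w x y e K :: real
  assumes e: "e > 0" and w: "w \<ge> 0" and K: "y^2 \<le> K"
  shows "w * (x * y) \<le> e * w * x^2 + w * K / (4 * e)"
proof -
  have "w * (x * y) \<le> w * (e * x^2 + y^2 / (4 * e))" by (rule mult_left_mono[OF young[OF e] w])
  also have "y^2 / (4 * e) \<le> K / (4 * e)" using K e by (simp add: divide_right_mono)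
  then have "w * (e * x^2 + y^2 / (4 * e)) \<le> w * (e * x^2 + K / (4 * e))"
    using w by (simp add: mult_left_mono)
  finally show ?thesis by (simp add: algebra_simps)
qed

lemma pointwise:
  fixes r r0 R u bt ps s w a c Lp V u1 ph Hu Gu N e d L g b :: real
  assumes r: "r > 0" "r \<le> r0" "r0 < R" and u: "u > 0" and bt: "bt > 0"
    and ps: "ps = u * bt" and s: "s = sqrt ps" and w: "w \<ge> 0"
    and e: "e > 0" and d: "d > 0" and L: "L > 0" and g: "g > 0"
    and HG: "Hu \<le> g * Gu + b * (u + 1)" and psG: "u^2 / ps \<le> L * (Gu + u + 1)"
    and Lp: "Lp = c + (N - 1) * a / r" and N: "N \<ge> 0"
  shows "((N - 2) / 2 - 2 * e) * w * a^2 + (N / 2 * w * a^2 + r * w * a * c)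
      + (N * w * Hu + (r * w) * (ph / bt) * u1)
    \<le> (N * g + d * L) * w * Gu + (R * r0 / (4 * e)) * w * (Lp - V + u)^2
      + (R * r0 / (4 * d)) * w * (ph / s * u1 - s * a)^2 + (R^2 / (4 * e)) * w * V^2
      + (N * b + d * L) * w * (u + 1)"
proof -
  define F where "F = Lp - V + u"
  define G where "G = ph / s * u1 - s * a"
  have sp: "s > 0" using s ps u bt by simp
  have idt: "(N - 2) / 2 * w * a^2 = F * (r * w) * a + (r * w) * V * a
    + (r * w) * (u / s) * G + N * w * Hu
    - (N / 2 * w * a^2 + r * w * a * c) - (N * w * Hu + (r * w) * (ph / bt) * u1)"
    unfolding F_def G_def Lp by (rule alg_identity[OF r(1) u bt]) (simp add: s ps)
  have rr: "r^2 \<le> R * r0"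
  proof -
    have "r^2 \<le> r0 * r0" using r by (simp add: power2_eq_square mult_mono)
    also have "\<dots> \<le> R * r0" using r by (simp add: mult_right_mono)
    finally show ?thesis .
  qed
  have rR: "r^2 \<le> R^2" using r by (simp add: power_mono)
  have i1: "w * (a * (r * F)) \<le> e * w * a^2 + w * (R * r0 * F^2) / (4 * e)"
    by (rule young_w[OF e w]) (use rr in \<open>simp add: power_mult_distrib mult_right_mono\<close>)
  have i2: "w * (a * (r * V)) \<le> e * w * a^2 + w * (R^2 * V^2) / (4 * e)"
    by (rule young_w[OF e w]) (use rR in \<open>simp add: power_mult_distrib mult_right_mono\<close>)
  have i3: "w * ((u / s) * (r * G)) \<le> d * w * (u / s)^2 + w * (R * r0 * G^2) / (4 * d)"
    by (rule young_w[OF d w]) (use rr in \<open>simp add: power_mult_distrib mult_right_mono\<close>)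
  have us: "(u / s)^2 = u^2 / ps" using sp s ps u bt by (simp add: power_divide)
  have i4: "d * w * (u / s)^2 \<le> d * w * (L * (Gu + u + 1))"
  proof -
    have "0 \<le> d * w" using d w by simp
    from mult_left_mono[OF psG this] show ?thesis unfolding us by simp
  qed
  have i5: "N * w * Hu \<le> N * w * (g * Gu + b * (u + 1))"
    using HG N w by (simp add: mult_left_mono)
  have "((N - 2) / 2 - 2 * e) * w * a^2 + (N / 2 * w * a^2 + r * w * a * c)
      + (N * w * Hu + (r * w) * (ph / bt) * u1)
      = w * (a * (r * F)) + w * (a * (r * V)) + w * ((u / s) * (r * G)) + N * w * Hu - 2 * e * w * a^2"
    using idt by (simp add: algebra_simps)
  also have "\<dots> \<le> (e * w * a^2 + w * (R * r0 * F^2) / (4 * e)) + (e * w * a^2 + w * (R^2 * V^2) / (4 * e))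
      + (d * w * (L * (Gu + u + 1)) + w * (R * r0 * G^2) / (4 * d)) + N * w * (g * Gu + b * (u + 1)) - 2 * e * w * a^2"
    using i1 i2 i3 i4 i5 by linarith
  also have "\<dots> = (N * g + d * L) * w * Gu + (R * r0 / (4 * e)) * w * F^2
      + (R * r0 / (4 * d)) * w * G^2 + (R^2 / (4 * e)) * w * V^2
      + (N * b + d * L) * w * (u + 1)"
    by (simp add: algebra_simps)
  finally show ?thesis unfolding F_def G_def .
qed


lemma cint: "continuous_on {0..R} (f::real\<Rightarrow>real) \<Longrightarrow> 0 \<le> a \<Longrightarrow> c \<le> R \<Longrightarrow> f integrable_on {a..c}"
  by (rule integrable_continuous_interval) (erule continuous_on_subset, auto)

lemma ext_le:
  assumes "continuous_on {0..R} (f::real\<Rightarrow>real)" "\<forall>r\<in>{0..R}. f r \<ge> 0" "0 \<le> r0" "r0 \<le> R"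
  shows "integral {0..r0} f \<le> integral {0..R} f"
  by (rule integral_subset_le) (use assms in \<open>auto intro: cint\<close>)

definition oneC :: "nat \<Rightarrow> real \<Rightarrow> real \<Rightarrow> real \<Rightarrow> real \<Rightarrow> real \<Rightarrow> real \<Rightarrow> real" where
  "oneC n \<gamma> b L R Mu W = (let \<eta> = real n - 2 - real n * \<gamma>; e = \<eta> / 8; d = \<eta> / (4 * L);
      c0 = (real n - 2) / 2 - 2 * e; K1 = real n * \<gamma> + d * L in
      (R / (4 * e) + R / (4 * d) + R^2 / (4 * e) + (K1 * b / \<gamma> + real n * b + d * L) * (Mu + W)) / c0 + 1)"

definition oneMu :: "nat \<Rightarrow> real \<Rightarrow> real" where
  "oneMu n \<gamma> = (real n * \<gamma> + (real n - 2 - real n * \<gamma>) / 4) / ((real n - 2) / 2 - (real n - 2 - real n * \<gamma>) / 4)"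

lemma oneMu_bounds:
  assumes "n \<ge> 3" "0 < \<gamma>" "real n * \<gamma> < real n - 2"
  shows "0 < oneMu n \<gamma>" "oneMu n \<gamma> < 2"
proof -
  define \<eta> where "\<eta> = real n - 2 - real n * \<gamma>"
  have "real n * \<gamma> \<ge> 0" using assms by simp
  then have e: "\<eta> > 0" "\<eta> \<le> real n - 2" using assms \<eta>_def by auto
  have c0: "(real n - 2) / 2 - \<eta> / 4 > 0" using e by simp
  have "real n * \<gamma> > 0" using assms by simp
  then have k: "real n * \<gamma> + \<eta> / 4 > 0" using e by simp
  show "0 < oneMu n \<gamma>" unfolding oneMu_def \<eta>_def[symmetric] using c0 k by simp
  have a: "real n * \<gamma> + \<eta> / 4 < (real n - 2) - \<eta> / 2" using e \<eta>_def by linarith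
  have "(real n - 2) - \<eta> / 2 = 2 * ((real n - 2) / 2 - \<eta> / 4)" by (simp add: algebra_simps)
  with a have "real n * \<gamma> + \<eta> / 4 < 2 * ((real n - 2) / 2 - \<eta> / 4)" by simp
  then show "oneMu n \<gamma> < 2" unfolding oneMu_def \<eta>_def[symmetric] using c0 by (simp add: divide_less_eq)
qed


lemma oneD:
  fixes U U1 V V1 V2 Lp \<phi> \<beta> \<psi> G H :: "real \<Rightarrow> real" and n :: nat and r0 R \<gamma> b L :: real
  assumes n: "n \<ge> 3" and r0: "0 < r0" "r0 < R"
    and cU: "continuous_on {0..R} U" and cU1: "continuous_on {0..R} U1"
    and cV: "continuous_on {0..R} V" and cV1: "continuous_on {0..R} V1"
    and cV2: "continuous_on {0..R} V2" and cLp: "continuous_on {0..R} Lp"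
    and Upos: "\<forall>r\<in>{0..R}. U r > 0"
    and dU: "\<forall>r\<in>{0<..<R}. (U has_real_derivative U1 r) (at r)"
    and dV1: "\<forall>r\<in>{0<..<R}. (V1 has_real_derivative V2 r) (at r)"
    and Lp: "\<forall>r\<in>{0<..<R}. Lp r = V2 r + (real n - 1) * V1 r / r"
    and cphi: "continuous_on {0..} \<phi>" and cbeta: "continuous_on {0..} \<beta>"
    and beta_pos: "\<forall>s\<ge>0. \<beta> s > 0"
    and psi: "\<forall>s\<ge>0. \<psi> s = s * \<beta> s"
    and dH: "\<forall>s>0. (H has_real_derivative \<phi> s / \<beta> s) (at s)"
    and Hnn: "\<forall>s>0. H s \<ge> 0"
    and cG: "continuous_on {0..R} (\<lambda>r. G (U r))"
    and gam: "0 < \<gamma>" "real n * \<gamma> < real n - 2"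
    and HG: "\<forall>s>0. H s \<le> \<gamma> * G s + b * (s + 1)"
    and psiG: "\<forall>s>0. s^2 / \<psi> s \<le> L * (G s + s + 1)"
    and b: "b > 0" and L: "L > 0"
  shows "integral {0..r0} (\<lambda>r. r^(n-1) * (V1 r)^2) \<le>
     oneMu n \<gamma> * integral {0..R} (\<lambda>r. r^(n-1) * G (U r))
     + oneC n \<gamma> b L R (integral {0..R} (\<lambda>r. r^(n-1) * U r)) (integral {0..R} (\<lambda>r. r^(n-1)))
       * (r0 * integral {0..R} (\<lambda>r. r^(n-1) * (Lp r - V r + U r)^2)
          + r0 * integral {0..R} (\<lambda>r. r^(n-1) * (\<phi> (U r) / sqrt (\<psi> (U r)) * U1 r - sqrt (\<psi> (U r)) * V1 r)^2)
          + integral {0..R} (\<lambda>r. r^(n-1) * (V r)^2) + 1)"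
proof -
  define N where "N = real n"
  define w where "w = (\<lambda>r::real. r^(n-1))"
  define \<eta> where "\<eta> = N - 2 - N * \<gamma>"
  define e where "e = \<eta> / 8"
  define d where "d = \<eta> / (4 * L)"
  define c0 where "c0 = (N - 2) / 2 - 2 * e"
  define K1 where "K1 = N * \<gamma> + d * L"
  define Mu where "Mu = integral {0..R} (\<lambda>r. w r * U r)"
  define W where "W = integral {0..R} w"
  define g where "g = (\<lambda>r. \<phi> (U r) / sqrt (\<psi> (U r)) * U1 r - sqrt (\<psi> (U r)) * V1 r)"
  define F where "F = (\<lambda>r. Lp r - V r + U r)"
  have Ngam: "N * \<gamma> \<ge> 0" using gam N_def by simp
  have N0: "N \<ge> 0" unfolding N_def by simp
  have eta: "\<eta> > 0" "\<eta> \<le> N - 2" using gam Ngam unfolding \<eta>_def N_def by auto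
  have epos: "e > 0" using eta e_def by simp
  have dpos: "d > 0" using eta L d_def by simp
  have dL: "d * L = \<eta> / 4" using L d_def by simp
  have c0e: "c0 = (N - 2) / 2 - \<eta> / 4" unfolding c0_def e_def by simp
  have c0pos: "c0 > 0" unfolding c0e using eta by simp
  have K1pos: "K1 > 0" unfolding K1_def using dL eta Ngam by simp
  have muEq: "oneMu n \<gamma> = K1 / c0"
    unfolding oneMu_def K1_def dL c0e unfolding \<eta>_def N_def ..
  have CEq: "oneC n \<gamma> b L R Mu W = (R / (4 * e) + R / (4 * d) + R^2 / (4 * e) + (K1 * b / \<gamma> + N * b + d * L) * (Mu + W)) / c0 + 1"
    unfolding oneC_def Let_def K1_def c0_def e_def d_def \<eta>_def N_def ..
  have Uimg: "U ` {0..R} \<subseteq> {0..}" using Upos by (auto simp: less_imp_le)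
  have Uimg': "U ` {0..R} \<subseteq> {0<..}" using Upos by auto
  have cphiU: "continuous_on {0..R} (\<lambda>r. \<phi> (U r))" by (rule continuous_on_compose2[OF cphi cU Uimg])
  have cbetaU: "continuous_on {0..R} (\<lambda>r. \<beta> (U r))" by (rule continuous_on_compose2[OF cbeta cU Uimg])
  have psiU: "\<psi> (U r) = U r * \<beta> (U r)" if "r \<in> {0..R}" for r
    using psi Upos that by (simp add: less_imp_le)
  have betaU: "\<beta> (U r) > 0" if "r \<in> {0..R}" for r using beta_pos Upos that by (simp add: less_imp_le)
  have psipos: "\<psi> (U r) > 0" if "r \<in> {0..R}" for r
    using psiU[OF that] betaU[OF that] Upos that by simp
  have cpsiU: "continuous_on {0..R} (\<lambda>r. \<psi> (U r))"
    by (rule continuous_on_eq[of _ "\<lambda>r. U r * \<beta> (U r)"]) (intro continuous_intros cU cbetaU, simp add: psiU)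
  have cH: "continuous_on {0<..} H"
  proof (rule DERIV_continuous_on[where D="\<lambda>s. \<phi> s / \<beta> s"])
    fix x :: real assume "x \<in> {0<..}"
    then have "(H has_real_derivative \<phi> x / \<beta> x) (at x)" using dH by simp
    then show "(H has_real_derivative \<phi> x / \<beta> x) (at x within {0<..})" by (rule has_field_derivative_at_within)
  qed
  have cHU: "continuous_on {0..R} (\<lambda>r. H (U r))" by (rule continuous_on_compose2[OF cH cU Uimg'])
  have sqne: "\<forall>r\<in>{0..R}. sqrt (\<psi> (U r)) \<noteq> 0" using psipos by fastforce
  have cg: "continuous_on {0..R} g" unfolding g_def
    by (intro continuous_intros cphiU cU1 cV1 cpsiU sqne)
  have cF: "continuous_on {0..R} F" unfolding F_def by (intro continuous_intros cLp cV cU)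
  have cw: "continuous_on {0..R} w" unfolding w_def by (intro continuous_intros)
  have wnn: "w r \<ge> 0" if "r \<ge> 0" for r unfolding w_def using that by simp
  have w0: "w 0 = 0" unfolding w_def using n by simp
  have pw: "r^n = r * w r" for r :: real
  proof -
    have "n = Suc (n - 1)" using n by simp
    then have "r^n = r^(Suc (n-1))" by simp
    then show ?thesis unfolding w_def by simp
  qed

  define P1d where "P1d = (\<lambda>r. N / 2 * w r * (V1 r)^2 + r * w r * V1 r * V2 r)"
  define P2d where "P2d = (\<lambda>r. N * w r * H (U r) + (r * w r) * (\<phi> (U r) / \<beta> (U r)) * U1 r)"
  define LHSf where "LHSf = (\<lambda>r. c0 * (w r * (V1 r)^2) + P1d r + P2d r)"
  define RHSf where "RHSf = (\<lambda>r. K1 * (w r * G (U r)) + (R * r0 / (4 * e)) * (w r * (F r)^2)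
      + (R * r0 / (4 * d)) * (w r * (g r)^2) + (R^2 / (4 * e)) * (w r * (V r)^2)
      + (N * b + d * L) * (w r * (U r + 1)))"
  have ptw: "LHSf r \<le> RHSf r" if r: "r \<in> {0..r0}" for r
  proof (cases "r = 0")
    case True
    then show ?thesis unfolding LHSf_def RHSf_def P1d_def P2d_def using w0 by simp
  next
    case False
    then have rpos: "r > 0" using r by simp
    have rR: "r \<in> {0..R}" using r r0 by simp
    have rR': "r \<in> {0<..<R}" using rpos r r0 by simp
    have u: "U r > 0" using Upos rR by simp
    have rle: "r \<le> r0" using r by simp
    have HGu: "H (U r) \<le> \<gamma> * G (U r) + b * (U r + 1)" using HG u by simp
    have psGu: "(U r)^2 / \<psi> (U r) \<le> L * (G (U r) + U r + 1)" using psiG u by simp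
    have Lpr: "Lp r = V2 r + (N - 1) * V1 r / r" using Lp rR' N_def by simp
    have pt: "((N - 2) / 2 - 2 * e) * w r * (V1 r)^2 + (N / 2 * w r * (V1 r)^2 + r * w r * V1 r * V2 r)
      + (N * w r * H (U r) + (r * w r) * (\<phi> (U r) / \<beta> (U r)) * U1 r)
    \<le> (N * \<gamma> + d * L) * w r * G (U r) + (R * r0 / (4 * e)) * w r * (Lp r - V r + U r)^2
      + (R * r0 / (4 * d)) * w r * (\<phi> (U r) / sqrt (\<psi> (U r)) * U1 r - sqrt (\<psi> (U r)) * V1 r)^2
      + (R^2 / (4 * e)) * w r * (V r)^2
      + (N * b + d * L) * w r * (U r + 1)"
      by (rule pointwise[OF rpos rle r0(2) u betaU[OF rR] psiU[OF rR] refl wnn[OF less_imp_le[OF rpos]] epos dpos L gam(1) HGu psGu Lpr N0])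
    then show ?thesis unfolding LHSf_def RHSf_def P1d_def P2d_def c0_def K1_def F_def g_def
      by (simp add: mult.assoc)
  qed

  have wr: "r^(n - Suc 0) = w r" for r :: real by (simp add: w_def)
  define P1 where "P1 = (\<lambda>r. r^n * (V1 r * V1 r) / 2)"
  define P2 where "P2 = (\<lambda>r. r^n * H (U r))"
  have dP1: "(P1 has_real_derivative P1d r) (at r)" if "r \<in> {0<..<R}" for r
  proof -
    have dv: "(V1 has_real_derivative V2 r) (at r)" using dV1 that by simp
    have "((\<lambda>r. r^n * (V1 r * V1 r)) has_real_derivative
        (real n * r^(n - Suc 0)) * (V1 r * V1 r) + (V2 r * V1 r + V2 r * V1 r) * r^n) (at r)"
      by (rule DERIV_mult[OF DERIV_pow DERIV_mult[OF dv dv]])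
    then have "(P1 has_real_derivative ((real n * r^(n - Suc 0)) * (V1 r * V1 r) + (V2 r * V1 r + V2 r * V1 r) * r^n) / 2) (at r)"
      unfolding P1_def by (rule DERIV_cdivide)
    then show ?thesis
      by (rule DERIV_cong) (simp add: P1d_def pw wr N_def power2_eq_square algebra_simps)
  qed
  have dP2: "(P2 has_real_derivative P2d r) (at r)" if "r \<in> {0<..<R}" for r
  proof -
    have u: "U r > 0" using Upos that by simp
    have dHr: "(H has_real_derivative \<phi> (U r) / \<beta> (U r)) (at (U r))" using dH u by simp
    have dUr: "(U has_real_derivative U1 r) (at r)" using dU that by simp
    have dHU: "((\<lambda>r. H (U r)) has_real_derivative (\<phi> (U r) / \<beta> (U r)) * U1 r) (at r)"
      by (rule DERIV_chain2[where f=H and g=U and x=r, OF dHr dUr])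
    have "(P2 has_real_derivative (real n * r^(n - Suc 0)) * H (U r) + ((\<phi> (U r) / \<beta> (U r)) * U1 r) * r^n) (at r)"
      unfolding P2_def by (rule DERIV_mult[OF DERIV_pow dHU])
    then show ?thesis
      by (rule DERIV_cong) (simp add: P2d_def pw wr N_def algebra_simps)
  qed
  have cP1: "continuous_on {0..r0} P1" unfolding P1_def
    by (intro continuous_intros continuous_on_subset[OF cV1]) (use r0 in auto)
  have cP2: "continuous_on {0..r0} P2" unfolding P2_def
    by (intro continuous_intros continuous_on_subset[OF cHU]) (use r0 in auto)
  have iP1: "(P1d has_integral (P1 r0 - P1 0)) {0..r0}"
  proof (rule fundamental_theorem_of_calculus_interior[OF less_imp_le[OF r0(1)] cP1])
    fix x assume "x \<in> {0<..<r0}"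
    then have "x \<in> {0<..<R}" using r0 by simp
    from dP1[OF this] show "(P1 has_vector_derivative P1d x) (at x)"
      by (simp add: has_real_derivative_iff_has_vector_derivative)
  qed
  have iP2: "(P2d has_integral (P2 r0 - P2 0)) {0..r0}"
  proof (rule fundamental_theorem_of_calculus_interior[OF less_imp_le[OF r0(1)] cP2])
    fix x assume "x \<in> {0<..<r0}"
    then have "x \<in> {0<..<R}" using r0 by simp
    from dP2[OF this] show "(P2 has_vector_derivative P2d x) (at x)"
      by (simp add: has_real_derivative_iff_has_vector_derivative)
  qed
  have P10: "P1 0 = 0" "P2 0 = 0" unfolding P1_def P2_def using n by auto
  have P1r0: "P1 r0 \<ge> 0" unfolding P1_def using r0 by simp
  have P2r0: "P2 r0 \<ge> 0" unfolding P2_def using r0 Hnn Upos by simp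

  have ci: "f integrable_on {0..r0}" if "continuous_on {0..R} f" for f :: "real \<Rightarrow> real"
    by (rule cint[OF that]) (use r0 in auto)
  have ciR: "f integrable_on {0..R}" if "continuous_on {0..R} f" for f :: "real \<Rightarrow> real"
    by (rule cint[OF that]) (use r0 in auto)
  have c1: "continuous_on {0..R} (\<lambda>r. w r * (V1 r)^2)" by (intro continuous_intros cw cV1)
  have c2: "continuous_on {0..R} (\<lambda>r. w r * G (U r))" by (intro continuous_intros cw cG)
  have c3: "continuous_on {0..R} (\<lambda>r. w r * (F r)^2)" by (intro continuous_intros cw cF)
  have c4: "continuous_on {0..R} (\<lambda>r. w r * (g r)^2)" by (intro continuous_intros cw cg)
  have c5: "continuous_on {0..R} (\<lambda>r. w r * (V r)^2)" by (intro continuous_intros cw cV)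
  have c6: "continuous_on {0..R} (\<lambda>r. w r * (U r + 1))" by (intro continuous_intros cw cU)
  define I where "I = integral {0..r0} (\<lambda>r. w r * (V1 r)^2)"
  define JG0 where "JG0 = integral {0..r0} (\<lambda>r. w r * G (U r))"
  define JF0 where "JF0 = integral {0..r0} (\<lambda>r. w r * (F r)^2)"
  define Jg0 where "Jg0 = integral {0..r0} (\<lambda>r. w r * (g r)^2)"
  define JV0 where "JV0 = integral {0..r0} (\<lambda>r. w r * (V r)^2)"
  define JU0 where "JU0 = integral {0..r0} (\<lambda>r. w r * (U r + 1))"
  have hLHS: "(LHSf has_integral (c0 * I + (P1 r0 - P1 0) + (P2 r0 - P2 0))) {0..r0}"
    unfolding LHSf_def I_def
    by (intro has_integral_add has_integral_mult_right integrable_integral ci c1 iP1 iP2)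
  have hRHS: "(RHSf has_integral (K1 * JG0 + (R * r0 / (4 * e)) * JF0 + (R * r0 / (4 * d)) * Jg0
      + (R^2 / (4 * e)) * JV0 + (N * b + d * L) * JU0)) {0..r0}"
    unfolding RHSf_def JG0_def JF0_def Jg0_def JV0_def JU0_def
    by (intro has_integral_add has_integral_mult_right integrable_integral ci c2 c3 c4 c5 c6)
  have main0: "c0 * I + (P1 r0 - P1 0) + (P2 r0 - P2 0) \<le> K1 * JG0 + (R * r0 / (4 * e)) * JF0 + (R * r0 / (4 * d)) * Jg0
      + (R^2 / (4 * e)) * JV0 + (N * b + d * L) * JU0"
    by (rule has_integral_le[OF hLHS hRHS ptw])
  define JG where "JG = integral {0..R} (\<lambda>r. w r * G (U r))"
  define JF where "JF = integral {0..R} (\<lambda>r. w r * (F r)^2)"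
  define Jg where "Jg = integral {0..R} (\<lambda>r. w r * (g r)^2)"
  define JV where "JV = integral {0..R} (\<lambda>r. w r * (V r)^2)"
  define JU where "JU = integral {0..R} (\<lambda>r. w r * (U r + 1))"
  have r0R: "0 \<le> r0" "r0 \<le> R" using r0 by auto
  have JFle: "JF0 \<le> JF" unfolding JF0_def JF_def by (rule ext_le[OF c3 _ r0R]) (auto intro!: mult_nonneg_nonneg wnn)
  have Jgle: "Jg0 \<le> Jg" unfolding Jg0_def Jg_def by (rule ext_le[OF c4 _ r0R]) (auto intro!: mult_nonneg_nonneg wnn)
  have JVle: "JV0 \<le> JV" unfolding JV0_def JV_def by (rule ext_le[OF c5 _ r0R]) (auto intro!: mult_nonneg_nonneg wnn)
  have Unn: "\<forall>r\<in>{0..R}. 0 \<le> w r * (U r + 1)" using Upos wnn by (auto intro!: mult_nonneg_nonneg simp: less_imp_le)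
  have JUle: "JU0 \<le> JU" unfolding JU0_def JU_def by (rule ext_le[OF c6 Unn r0R])
  have JU0nn: "JU0 \<ge> 0" unfolding JU0_def
    by (rule integral_nonneg[OF ci[OF c6]]) (use Unn r0 in auto)
  have JUnn: "JU \<ge> 0" using JU0nn JUle by simp
  define k where "k = b / \<gamma>"
  have Gk: "G (U r) + k * (U r + 1) \<ge> 0" if "r \<in> {0..R}" for r
  proof -
    have u: "U r > 0" using Upos that by simp
    have "\<gamma> * G (U r) + b * (U r + 1) \<ge> 0" using HG Hnn u by (meson order_trans)
    then have "(\<gamma> * G (U r) + b * (U r + 1)) / \<gamma> \<ge> 0" using gam by simp
    then show ?thesis unfolding k_def using gam by (simp add: field_simps)
  qed
  have c7: "continuous_on {0..R} (\<lambda>r. w r * G (U r) + k * (w r * (U r + 1)))" by (intro continuous_intros c2 c6)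
  have nn7: "\<forall>r\<in>{0..R}. 0 \<le> w r * G (U r) + k * (w r * (U r + 1))"
  proof
    fix r assume r: "r \<in> {0..R}"
    have "0 \<le> w r * (G (U r) + k * (U r + 1))" using Gk[OF r] wnn r by simp
    then show "0 \<le> w r * G (U r) + k * (w r * (U r + 1))" by (simp add: algebra_simps)
  qed
  have e7: "integral {0..r0} (\<lambda>r. w r * G (U r) + k * (w r * (U r + 1))) \<le> integral {0..R} (\<lambda>r. w r * G (U r) + k * (w r * (U r + 1)))"
    by (rule ext_le[OF c7 nn7 r0R])
  have e70: "integral {0..r0} (\<lambda>r. w r * G (U r) + k * (w r * (U r + 1))) = JG0 + k * JU0"
    unfolding JG0_def JU0_def by (simp add: integral_add integral_mult_right ci c2 c6 integrable_on_mult_right)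
  have e7R: "integral {0..R} (\<lambda>r. w r * G (U r) + k * (w r * (U r + 1))) = JG + k * JU"
    unfolding JG_def JU_def by (simp add: integral_add integral_mult_right ciR c2 c6 integrable_on_mult_right)
  have kpos: "k > 0" unfolding k_def using b gam by simp
  have JGle: "JG0 \<le> JG + k * JU" using e7 e70 e7R JU0nn kpos by (smt (verit) mult_nonneg_nonneg)
  have JUeq: "JU = Mu + W" unfolding JU_def Mu_def W_def
    by (simp add: algebra_simps integral_add ciR c6 cw continuous_intros cU)

  have nnint: "integral {0..R} f \<ge> 0" if "continuous_on {0..R} f" "\<forall>r\<in>{0..R}. f r \<ge> 0" for f :: "real \<Rightarrow> real"
    by (rule integral_nonneg[OF ciR[OF that(1)]]) (use that in auto)
  have JFnn: "JF \<ge> 0" unfolding JF_def by (rule nnint[OF c3]) (auto intro!: mult_nonneg_nonneg wnn)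
  have Jgnn: "Jg \<ge> 0" unfolding Jg_def by (rule nnint[OF c4]) (auto intro!: mult_nonneg_nonneg wnn)
  have JVnn: "JV \<ge> 0" unfolding JV_def by (rule nnint[OF c5]) (auto intro!: mult_nonneg_nonneg wnn)
  define A where "A = R / (4 * e)"
  define B where "B = R / (4 * d)"
  define Cc where "Cc = R^2 / (4 * e)"
  define Dd where "Dd = N * b + d * L"
  define Q where "Q = (K1 * b / \<gamma> + N * b + d * L) * (Mu + W)"
  define T where "T = A + B + Cc + Q"
  define X where "X = r0 * JF + r0 * Jg + JV + 1"
  have Rpos: "R > 0" using r0 by simp
  have Apos: "A > 0" unfolding A_def using Rpos epos by simp
  have Bpos: "B > 0" unfolding B_def using Rpos dpos by simp
  have Cpos: "Cc > 0" unfolding Cc_def using Rpos epos by simp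
  have Ddnn: "Dd \<ge> 0" unfolding Dd_def using N0 b dpos L by simp
  have Qnn: "Q \<ge> 0" unfolding Q_def using K1pos b gam N0 dpos L JUnn JUeq by simp
  have s1: "K1 * JG0 \<le> K1 * (JG + k * JU)" using JGle K1pos by simp
  have s2: "(R * r0 / (4 * e)) * JF0 \<le> A * (r0 * JF)"
  proof -
    have "R * r0 / (4 * e) \<ge> 0" using Rpos r0 epos by simp
    from mult_left_mono[OF JFle this] have "(R * r0 / (4 * e)) * JF0 \<le> (R * r0 / (4 * e)) * JF" .
    then show ?thesis unfolding A_def by simp
  qed
  have s3: "(R * r0 / (4 * d)) * Jg0 \<le> B * (r0 * Jg)"
  proof -
    have "R * r0 / (4 * d) \<ge> 0" using Rpos r0 dpos by simp
    from mult_left_mono[OF Jgle this] have "(R * r0 / (4 * d)) * Jg0 \<le> (R * r0 / (4 * d)) * Jg" .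
    then show ?thesis unfolding B_def by simp
  qed
  have s4: "(R^2 / (4 * e)) * JV0 \<le> Cc * JV" unfolding Cc_def
    by (rule mult_left_mono[OF JVle]) (use epos in simp)
  have s5: "Dd * JU0 \<le> Dd * JU" by (rule mult_left_mono[OF JUle Ddnn])
  have c0I: "c0 * I \<le> K1 * JG + (K1 * k * JU + Dd * JU) + A * (r0 * JF) + B * (r0 * Jg) + Cc * JV"
    using main0 P10 P1r0 P2r0 s1 s2 s3 s4 s5 unfolding Dd_def[symmetric] by (simp add: algebra_simps)
  have QJ: "K1 * k * JU + Dd * JU = Q" unfolding Q_def Dd_def k_def JUeq by (simp add: algebra_simps)
  have r0JF: "r0 * JF \<ge> 0" "r0 * Jg \<ge> 0" using r0 JFnn Jgnn by auto
  have t1: "A * (r0 * JF) \<le> T * (r0 * JF)" unfolding T_def using Bpos Cpos Qnn r0JF by (simp add: mult_right_mono)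
  have t2: "B * (r0 * Jg) \<le> T * (r0 * Jg)" unfolding T_def using Apos Cpos Qnn r0JF by (simp add: mult_right_mono)
  have t3: "Cc * JV \<le> T * JV" unfolding T_def using Apos Bpos Qnn JVnn by (simp add: mult_right_mono)
  have t4: "Q \<le> T" unfolding T_def using Apos Bpos Cpos by simp
  have TX: "T * X = T * (r0 * JF) + T * (r0 * Jg) + T * JV + T" unfolding X_def by (simp add: algebra_simps)
  have c0I2: "c0 * I \<le> K1 * JG + T * X" using c0I QJ t1 t2 t3 t4 TX by linarith
  have Xge: "X \<ge> 1" unfolding X_def using r0JF JVnn by simp
  have Tnn: "T \<ge> 0" unfolding T_def using Apos Bpos Cpos Qnn by simp
  have "I \<le> (K1 * JG + T * X) / c0" using c0I2 c0pos by (simp add: pos_le_divide_eq mult.commute)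
  also have "\<dots> = K1 / c0 * JG + T / c0 * X" by (simp add: add_divide_distrib)
  also have "\<dots> \<le> K1 / c0 * JG + (T / c0 + 1) * X" using Xge by (simp add: distrib_right)
  finally have fin: "I \<le> oneMu n \<gamma> * JG + oneC n \<gamma> b L R Mu W * X"
    unfolding muEq CEq T_def A_def B_def Cc_def Q_def .
  show ?thesis using fin unfolding I_def JG_def X_def JF_def Jg_def JV_def Mu_def W_def w_def F_def g_def .
qed


lemma C2_cont: "C2_real_on S f \<Longrightarrow> continuous_on S f"
  unfolding C2_real_on_def by (metis DERIV_continuous_on)

lemma lbint_cont:
  fixes f :: "real \<Rightarrow> real"
  assumes "continuous_on {a..b} f" "a \<le> c" "c \<le> b"
  shows "continuous_on {a..b} (\<lambda>u. LBINT y=c..u. f y)"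
proof (rule DERIV_continuous_on[where D=f])
  fix x assume "x \<in> {a..b}"
  then have "((\<lambda>u. LBINT y=c..u. f y) has_vector_derivative f x) (at x within {a..b})"
    using interval_integral_FTC2[OF assms(2,3,1)] by simp
  then show "((\<lambda>u. LBINT y=c..u. f y) has_real_derivative f x) (at x within {a..b})"
    by (simp add: has_real_derivative_iff_has_vector_derivative)
qed

lemma G_cont:
  fixes \<phi> \<psi> G :: "real \<Rightarrow> real"
  assumes cphi: "continuous_on {0..} \<phi>" and cpsi: "continuous_on {0..} \<psi>"
    and psipos: "\<forall>s>0. \<psi> s > 0" and s0: "s0 > 0"
    and G_def: "\<forall>s>0. G s = (LBINT \<sigma>=ereal s0..ereal s. (LBINT \<tau>=ereal s0..ereal \<sigma>. \<phi> \<tau> / \<psi> \<tau>))"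
    and ab: "0 < a" "a \<le> s0" "s0 \<le> b"
  shows "continuous_on {a..b} G"
proof -
  have sub: "{a..b} \<subseteq> {0..}" using ab by auto
  have cf: "continuous_on {a..b} (\<lambda>\<tau>. \<phi> \<tau> / \<psi> \<tau>)"
    by (intro continuous_intros continuous_on_subset[OF cphi sub] continuous_on_subset[OF cpsi sub])
       (use psipos ab in \<open>auto intro!: less_imp_neq[symmetric]\<close>)
  have cK: "continuous_on {a..b} (\<lambda>\<sigma>. LBINT \<tau>=s0..\<sigma>. \<phi> \<tau> / \<psi> \<tau>)"
    by (rule lbint_cont[OF cf ab(2,3)])
  have cG': "continuous_on {a..b} (\<lambda>s. LBINT \<sigma>=s0..s. (LBINT \<tau>=s0..\<sigma>. \<phi> \<tau> / \<psi> \<tau>))"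
    by (rule lbint_cont[OF cK ab(2,3)])
  show ?thesis
    by (rule continuous_on_eq[OF cG']) (use G_def ab in auto)
qed

lemma H_props:
  fixes \<phi> \<psi> \<beta> H :: "real \<Rightarrow> real"
  assumes cphi: "continuous_on {0..} \<phi>" and cbeta: "continuous_on {0..} \<beta>"
    and phi_pos: "\<forall>s\<ge>0. \<phi> s > 0" and beta_pos: "\<forall>s\<ge>0. \<beta> s > 0"
    and psi_def: "\<forall>s\<ge>0. \<psi> s = s * \<beta> s"
    and H_def: "\<forall>s\<ge>0. H s = (LBINT \<sigma>=ereal 0..ereal s. \<sigma> * \<phi> \<sigma> / \<psi> \<sigma>)"
  shows "\<forall>s>0. (H has_real_derivative \<phi> s / \<beta> s) (at s)" "\<forall>s>0. H s \<ge> 0"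
proof -
  define k where "k = (\<lambda>\<sigma>. \<phi> \<sigma> / \<beta> \<sigma>)"
  have ck: "continuous_on {0..} k" unfolding k_def
    by (intro continuous_intros cphi cbeta) (use beta_pos in \<open>auto intro!: less_imp_neq[symmetric]\<close>)
  have Heq: "H s = integral {0..s} k" if s: "s \<ge> 0" for s
  proof -
    have "H s = (LBINT \<sigma>=ereal 0..ereal s. k \<sigma>)"
      unfolding H_def[rule_format, OF s]
    proof (rule interval_integral_cong)
      fix x assume "x \<in> einterval (min (ereal 0) (ereal s)) (max (ereal 0) (ereal s))"
      then have x: "x > 0" using s by (auto simp: einterval_def min_def max_def)
      show "x * \<phi> x / \<psi> x = k x" unfolding k_def using psi_def x beta_pos
        by (simp add: less_imp_le)
    qed
    also have "\<dots> = integral {0..s} k"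
      by (rule interval_integral_eq_integral[OF s borel_integrable_atLeastAtMost'])
         (rule continuous_on_subset[OF ck], auto)
    finally show ?thesis .
  qed
  show "\<forall>s>0. (H has_real_derivative \<phi> s / \<beta> s) (at s)"
  proof (intro allI impI)
    fix s :: real assume s: "s > 0"
    have "((\<lambda>u. integral {0..u} k) has_vector_derivative k s) (at s within {0..s+1})"
      by (rule integral_has_vector_derivative) (rule continuous_on_subset[OF ck], auto, use s in auto)
    moreover have "at s within {0..s+1} = at s"
      by (rule at_within_interior) (use s in simp)
    ultimately have d: "((\<lambda>u. integral {0..u} k) has_real_derivative k s) (at s)"
      by (simp add: has_real_derivative_iff_has_vector_derivative)
    have ks: "k s = \<phi> s / \<beta> s" by (simp add: k_def)
    show "(H has_real_derivative \<phi> s / \<beta> s) (at s)"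
    proof (rule has_field_derivative_transform_within_open[OF d[unfolded ks]])
      show "open {(0::real)<..}" by simp
      show "s \<in> {0<..}" using s by simp
      fix x :: real assume "x \<in> {0<..}"
      then show "integral {0..x} k = H x" using Heq by simp
    qed
  qed
  show "\<forall>s>0. H s \<ge> 0"
  proof (intro allI impI)
    fix s :: real assume s: "s > 0"
    have "integral {0..s} k \<ge> 0"
      by (rule integral_nonneg) (rule integrable_continuous_interval, rule continuous_on_subset[OF ck],
          auto simp: k_def intro!: divide_nonneg_pos less_imp_le phi_pos[rule_format] beta_pos[rule_format] divide_pos_pos)
    then show "H s \<ge> 0" using Heq s by simp
  qed
qed


lemma conv:
  fixes f :: "'a::euclidean_space \<Rightarrow> real" and h :: "real \<Rightarrow> real"
  assumes hc: "continuous_on {0..R} h" and rho: "0 \<le> \<rho>" "\<rho> \<le> R"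
    and eq: "\<And>x. x \<in> ball 0 \<rho> \<Longrightarrow> x \<noteq> 0 \<Longrightarrow> f x = h (norm x)"
  shows "integral (ball (0::'a) \<rho>) f
     = (real DIM('a) * measure lborel (ball (0::'a) 1)) * integral {0..\<rho>} (\<lambda>r. r^(DIM('a)-1) * h r)"
proof -
  have "integral (ball (0::'a) \<rho>) f = integral (ball (0::'a) \<rho>) (\<lambda>x. h (norm x))"
    by (rule integral_spike[of "{0}"]) (auto simp: eq)
  also have "\<dots> = integral {0..\<rho>} (\<lambda>r. real DIM('a) * measure lborel (ball (0::'a) 1) * r^(DIM('a)-1) * h r)"
    by (rule polar[OF hc rho])
  also have "(\<lambda>r. real DIM('a) * measure lborel (ball (0::'a) 1) * r^(DIM('a)-1) * h r)
      = (\<lambda>r. (real DIM('a) * measure lborel (ball (0::'a) 1)) * (r^(DIM('a)-1) * h r))"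
    by (rule ext) (simp only: mult.assoc)
  finally show ?thesis by simp
qed

lemma C1_cont:
  assumes "C1_grad_on S u du" shows "continuous_on S u" "continuous_on S du"
proof -
  show "continuous_on S du" using assms unfolding C1_grad_on_def by blast
  have "\<forall>x\<in>S. (u has_derivative (\<lambda>h. du x \<bullet> h)) (at x within S)"
    using assms unfolding C1_grad_on_def by blast
  then show "continuous_on S u"
    unfolding continuous_on_eq_continuous_within using has_derivative_continuous by blast
qed

lemma radial_path_cont:
  fixes f :: "'a::euclidean_space \<Rightarrow> 'b::real_normed_vector"
  assumes "continuous_on (cball (0::'a) R) f" "e \<in> Basis"
  shows "continuous_on {0..R} (\<lambda>r. f (r *\<^sub>R e))"
proof (rule continuous_on_compose2[OF assms(1)])
  show "continuous_on {0..R} (\<lambda>r. r *\<^sub>R e)" by (intro continuous_intros)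
  show "(\<lambda>r. r *\<^sub>R e) ` {0..R} \<subseteq> cball 0 R" using assms(2) by (auto simp: norm_Basis)
qed

lemma oneC_ge1:
  assumes "n \<ge> 3" "0 < \<gamma>" "real n * \<gamma> < real n - 2" "b > 0" "L > 0" "R > 0" "Mu + W \<ge> 0"
  shows "oneC n \<gamma> b L R Mu W \<ge> 1"
proof -
  define \<eta> where "\<eta> = real n - 2 - real n * \<gamma>"
  have "real n * \<gamma> \<ge> 0" using assms by simp
  then have eta: "\<eta> > 0" "\<eta> \<le> real n - 2" using assms \<eta>_def by auto
  define e where "e = \<eta> / 8"
  define d where "d = \<eta> / (4 * L)"
  have ep: "e > 0" "d > 0" using eta assms e_def d_def by auto
  have c0: "(real n - 2) / 2 - 2 * e > 0" using eta e_def by simp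
  have K1: "real n * \<gamma> + d * L > 0" using ep assms by (simp add: add_nonneg_pos \<open>real n * \<gamma> \<ge> 0\<close>)
  have q: "(real n * \<gamma> + d * L) * b / \<gamma> + real n * b + d * L \<ge> 0"
    using K1 assms ep by (intro add_nonneg_nonneg) auto
  have "R / (4 * e) + R / (4 * d) + R^2 / (4 * e) + ((real n * \<gamma> + d * L) * b / \<gamma> + real n * b + d * L) * (Mu + W) \<ge> 0"
  proof -
    have mq: "((real n * \<gamma> + d * L) * b / \<gamma> + real n * b + d * L) * (Mu + W) \<ge> 0"
      by (rule mult_nonneg_nonneg[OF q assms(7)])
    have "R / (4 * e) \<ge> 0" "R / (4 * d) \<ge> 0" "R^2 / (4 * e) \<ge> 0" using ep assms by auto
    with mq show ?thesis by linarith
  qed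
  then have "(R / (4 * e) + R / (4 * d) + R^2 / (4 * e) + ((real n * \<gamma> + d * L) * b / \<gamma> + real n * b + d * L) * (Mu + W))
      / ((real n - 2) / 2 - 2 * e) \<ge> 0" using c0 by simp
  then show ?thesis unfolding oneC_def Let_def \<eta>_def[symmetric] e_def[symmetric] d_def[symmetric] by simp
qed


theorem lemma2p1:
  fixes R :: real and \<phi> \<psi> \<beta> G H :: "real \<Rightarrow> real"
    and s0 b L \<gamma> m M B \<kappa> :: real
  assumes dim: "DIM('a::euclidean_space) \<ge> 3"
    and R: "R > 0"
    and phi_C2: "C2_real_on {0..} \<phi>" and phi_pos: "\<forall>s\<ge>0. \<phi> s > 0"
    and psi_C2: "C2_real_on {0..} \<psi>"
    and beta_C2: "C2_real_on {0..} \<beta>" and beta_pos: "\<forall>s\<ge>0. \<beta> s > 0"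
    and psi_def: "\<forall>s\<ge>0. \<psi> s = s * \<beta> s"
    and s0: "s0 > 0" and b: "b > 0" and L: "L > 0"
    and G_def: "\<forall>s>0. G s = (LBINT \<sigma>=ereal s0..ereal s. (LBINT \<tau>=ereal s0..ereal \<sigma>. \<phi> \<tau> / \<psi> \<tau>))"
    and H_def: "\<forall>s\<ge>0. H s = (LBINT \<sigma>=ereal 0..ereal s. \<sigma> * \<phi> \<sigma> / \<psi> \<sigma>)"
    and gamma: "0 < \<gamma>" "\<gamma> < (real DIM('a) - 2) / real DIM('a)"
    and HG: "\<forall>s>0. H s \<le> \<gamma> * G s + b * (s + 1)"
    and psi_G: "\<forall>s>0. s\<^sup>2 / \<psi> s \<le> L * (G s + s + 1)"
    and m: "m > 0" and M: "M > 0" and B: "B > 0" and kappa: "\<kappa> > real DIM('a) - 2"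
  shows "\<exists>\<mu> C. 0 < \<mu> \<and> \<mu> < 2 \<and> C > 0 \<and>
    (\<forall>r0 (u::'a \<Rightarrow> real) du v dv hv.
       0 < r0 \<and> r0 < R \<and>
       C1_grad_on (cball 0 R) u du \<and> C2_grad_on (cball 0 R) v dv hv \<and>
       (\<forall>x\<in>cball 0 R. u x > 0 \<and> v x > 0) \<and>
       radial_on (cball 0 R) u \<and> radial_on (cball 0 R) v \<and>
       (\<forall>x. norm x = R \<longrightarrow> dv x \<bullet> x = 0) \<and>
       integral (ball 0 R) u = m \<and> integral (ball 0 R) v \<le> M \<and>
       (\<forall>x\<in>ball 0 R. x \<noteq> 0 \<longrightarrow> v x \<le> B * norm x powr (-\<kappa>))
     \<longrightarrow>
       integral (ball 0 r0) (\<lambda>x. (norm (dv x))\<^sup>2)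
       \<le> \<mu> * integral (ball 0 R) (\<lambda>x. G (u x))
         + C * (r0 * integral (ball 0 R) (\<lambda>x. (laplacian hv x - v x + u x)\<^sup>2)
              + r0 * integral (ball 0 R)
                   (\<lambda>x. (norm ((\<phi> (u x) / sqrt (\<psi> (u x))) *\<^sub>R du x
                               - sqrt (\<psi> (u x)) *\<^sub>R dv x))\<^sup>2)
              + integral (ball 0 R) (\<lambda>x. (v x)\<^sup>2) + 1))"
proof -
  define n where "n = DIM('a)"
  have n3: "n \<ge> 3" using dim n_def by simp
  have cphi: "continuous_on {0..} \<phi>" by (rule C2_cont[OF phi_C2])
  have cbeta: "continuous_on {0..} \<beta>" by (rule C2_cont[OF beta_C2])
  have cpsi: "continuous_on {0..} \<psi>" by (rule C2_cont[OF psi_C2])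
  have psipos: "\<forall>s>0. \<psi> s > 0" using psi_def beta_pos by simp
  have Hp: "\<forall>s>0. (H has_real_derivative \<phi> s / \<beta> s) (at s)" "\<forall>s>0. H s \<ge> 0"
    using H_props[OF cphi cbeta phi_pos beta_pos psi_def H_def] by auto
  have gam': "real n * \<gamma> < real n - 2"
  proof -
    have "real n > 0" using n3 by simp
    with gamma(2) show ?thesis unfolding n_def by (simp add: pos_less_divide_eq mult.commute)
  qed
  define \<omega> where "\<omega> = real n * measure lborel (ball (0::'a) 1)"
  have \<omega>pos: "\<omega> > 0" unfolding \<omega>_def using n3 content_ball_pos[of 1 "0::'a"] by simp
  define W1 where "W1 = integral {0..R} (\<lambda>r::real. r^(n-1))"
  have W1nn: "W1 \<ge> 0" unfolding W1_def
    by (rule integral_nonneg) (auto intro!: integrable_continuous_interval continuous_intros)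
  define C1 where "C1 = oneC n \<gamma> b L R (m / \<omega>) W1"
  have C1ge: "C1 \<ge> 1" unfolding C1_def
    by (rule oneC_ge1[OF n3 gamma(1) gam' b L R]) (use m \<omega>pos W1nn in simp)
  define \<mu> where "\<mu> = oneMu n \<gamma>"
  have mub: "0 < \<mu>" "\<mu> < 2" unfolding \<mu>_def using oneMu_bounds[OF n3 gamma(1) gam'] by auto
  show ?thesis
  proof (rule exI[of _ \<mu>], rule exI[of _ "C1 * max 1 \<omega>"], intro conjI)
    show "0 < \<mu>" by (rule mub(1))
    show "\<mu> < 2" by (rule mub(2))
    show "0 < C1 * max 1 \<omega>" using C1ge by (simp add: less_max_iff_disj)
  next
    show "\<forall>r0 (u::'a \<Rightarrow> real) du v dv hv.
       0 < r0 \<and> r0 < R \<and>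
       C1_grad_on (cball 0 R) u du \<and> C2_grad_on (cball 0 R) v dv hv \<and>
       (\<forall>x\<in>cball 0 R. u x > 0 \<and> v x > 0) \<and>
       radial_on (cball 0 R) u \<and> radial_on (cball 0 R) v \<and>
       (\<forall>x. norm x = R \<longrightarrow> dv x \<bullet> x = 0) \<and>
       integral (ball 0 R) u = m \<and> integral (ball 0 R) v \<le> M \<and>
       (\<forall>x\<in>ball 0 R. x \<noteq> 0 \<longrightarrow> v x \<le> B * norm x powr (-\<kappa>))
     \<longrightarrow>
       integral (ball 0 r0) (\<lambda>x. (norm (dv x))\<^sup>2)
       \<le> \<mu> * integral (ball 0 R) (\<lambda>x. G (u x))
         + C1 * max 1 \<omega> * (r0 * integral (ball 0 R) (\<lambda>x. (laplacian hv x - v x + u x)\<^sup>2)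
              + r0 * integral (ball 0 R)
                   (\<lambda>x. (norm ((\<phi> (u x) / sqrt (\<psi> (u x))) *\<^sub>R du x
                               - sqrt (\<psi> (u x)) *\<^sub>R dv x))\<^sup>2)
              + integral (ball 0 R) (\<lambda>x. (v x)\<^sup>2) + 1)"
    proof (intro allI impI)
    fix r0 :: real and u :: "'a \<Rightarrow> real" and du v dv hv
    assume H0: "0 < r0 \<and> r0 < R \<and>
       C1_grad_on (cball 0 R) u du \<and> C2_grad_on (cball 0 R) v dv hv \<and>
       (\<forall>x\<in>cball 0 R. u x > 0 \<and> v x > 0) \<and>
       radial_on (cball 0 R) u \<and> radial_on (cball 0 R) v \<and>
       (\<forall>x. norm x = R \<longrightarrow> dv x \<bullet> x = 0) \<and>
       integral (ball 0 R) u = m \<and> integral (ball 0 R) v \<le> M \<and>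
       (\<forall>x\<in>ball 0 R. x \<noteq> 0 \<longrightarrow> v x \<le> B * norm x powr (-\<kappa>))"
    then have r0: "0 < r0" "r0 < R" and C1u: "C1_grad_on (cball 0 R) u du"
      and C2v: "C2_grad_on (cball 0 R) v dv hv" and uvpos: "\<forall>x\<in>cball 0 R. u x > 0 \<and> v x > 0"
      and radu: "radial_on (cball 0 R) u" and radv: "radial_on (cball 0 R) v"
      and um: "integral (ball 0 R) u = m" by auto
    show "integral (ball 0 r0) (\<lambda>x. (norm (dv x))\<^sup>2)
       \<le> \<mu> * integral (ball 0 R) (\<lambda>x. G (u x))
         + C1 * max 1 \<omega> * (r0 * integral (ball 0 R) (\<lambda>x. (laplacian hv x - v x + u x)\<^sup>2)
              + r0 * integral (ball 0 R)
                   (\<lambda>x. (norm ((\<phi> (u x) / sqrt (\<psi> (u x))) *\<^sub>R du x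
                               - sqrt (\<psi> (u x)) *\<^sub>R dv x))\<^sup>2)
              + integral (ball 0 R) (\<lambda>x. (v x)\<^sup>2) + 1)"
    proof -
    obtain e :: 'a where e: "e \<in> Basis" using nonempty_Basis by blast
    define U where "U = (\<lambda>r. u (r *\<^sub>R e))"
    define U1 where "U1 = (\<lambda>r. du (r *\<^sub>R e) \<bullet> e)"
    define V where "V = (\<lambda>r. v (r *\<^sub>R e))"
    define V1 where "V1 = (\<lambda>r. dv (r *\<^sub>R e) \<bullet> e)"
    define V2 where "V2 = (\<lambda>r. hv e (r *\<^sub>R e) \<bullet> e)"
    define Lp where "Lp = (\<lambda>r. laplacian hv (r *\<^sub>R e))"
    have C1v: "C1_grad_on (cball 0 R) v dv" using C2v unfolding C2_grad_on_def by blast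
    have C1b: "C1_grad_on (cball 0 R) (\<lambda>y. dv y \<bullet> c) (hv c)" if "c \<in> Basis" for c
      using C2v that unfolding C2_grad_on_def by blast
    have cu: "continuous_on (cball 0 R) u" "continuous_on (cball 0 R) du" using C1_cont[OF C1u] by auto
    have cv: "continuous_on (cball 0 R) v" "continuous_on (cball 0 R) dv" using C1_cont[OF C1v] by auto
    have chv: "continuous_on (cball 0 R) (hv c)" if "c \<in> Basis" for c using C1_cont(2)[OF C1b[OF that]] .
    have cU: "continuous_on {0..R} U" unfolding U_def by (rule radial_path_cont[OF cu(1) e])
    have cU1: "continuous_on {0..R} U1" unfolding U1_def by (intro continuous_intros radial_path_cont[OF cu(2) e])
    have cV: "continuous_on {0..R} V" unfolding V_def by (rule radial_path_cont[OF cv(1) e])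
    have cV1: "continuous_on {0..R} V1" unfolding V1_def by (intro continuous_intros radial_path_cont[OF cv(2) e])
    have cV2: "continuous_on {0..R} V2" unfolding V2_def by (intro continuous_intros radial_path_cont[OF chv[OF e] e])
    have cLp: "continuous_on {0..R} Lp" unfolding Lp_def laplacian_def
    proof (rule continuous_on_sum)
      fix c :: 'a assume c: "c \<in> Basis"
      show "continuous_on {0..R} (\<lambda>r. hv c (r *\<^sub>R e) \<bullet> c)"
        by (intro continuous_intros radial_path_cont[OF chv[OF c] e])
    qed
    have inball: "r *\<^sub>R e \<in> cball 0 R" if "r \<in> {0..R}" for r using that e by (simp add: norm_Basis)
    have Upos: "\<forall>r\<in>{0..R}. U r > 0" unfolding U_def using uvpos inball by blast
    have dU: "\<forall>r\<in>{0<..<R}. (U has_real_derivative U1 r) (at r)"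
      unfolding U_def U1_def using radial_deriv1[OF C1u e] by simp
    have dV1: "\<forall>r\<in>{0<..<R}. (V1 has_real_derivative V2 r) (at r)"
      unfolding V1_def V2_def using radial_deriv1[OF C1b[OF e] e] by simp
    have lapx: "laplacian hv x = V2 (norm x) + (real n - 1) * V1 (norm x) / norm x"
      if "x \<noteq> 0" "norm x < R" for x
      using radial_lap[OF C2v radv e that] unfolding V1_def V2_def n_def by simp
    have Lprel: "\<forall>r\<in>{0<..<R}. Lp r = V2 r + (real n - 1) * V1 r / r"
    proof
      fix r assume r: "r \<in> {0<..<R}"
      have "r *\<^sub>R e \<noteq> 0" "norm (r *\<^sub>R e) < R" using r e by (auto simp: norm_Basis)
      from lapx[OF this] show "Lp r = V2 r + (real n - 1) * V1 r / r"
        unfolding Lp_def using r e by (simp add: norm_Basis)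
    qed
    have cimg: "compact (U ` {0..R})" by (rule compact_continuous_image[OF cU compact_Icc])
    have neimg: "U ` {0..R} \<noteq> {}" using R by auto
    obtain lo where lo: "lo \<in> U ` {0..R}" "\<forall>y\<in>U ` {0..R}. lo \<le> y"
      using compact_attains_inf[OF cimg neimg] by blast
    obtain hi where hi: "hi \<in> U ` {0..R}" "\<forall>y\<in>U ` {0..R}. y \<le> hi"
      using compact_attains_sup[OF cimg neimg] by blast
    have lopos: "lo > 0" using lo Upos by auto
    have cGab: "continuous_on {min lo s0..max hi s0} G"
      by (rule G_cont[OF cphi cpsi psipos s0 G_def]) (use lopos s0 in auto)
    have cG: "continuous_on {0..R} (\<lambda>r. G (U r))"
      by (rule continuous_on_compose2[OF cGab cU]) (use lo hi in force)
    have one: "integral {0..r0} (\<lambda>r. r^(n-1) * (V1 r)^2) \<le>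
     oneMu n \<gamma> * integral {0..R} (\<lambda>r. r^(n-1) * G (U r))
     + oneC n \<gamma> b L R (integral {0..R} (\<lambda>r. r^(n-1) * U r)) (integral {0..R} (\<lambda>r. r^(n-1)))
       * (r0 * integral {0..R} (\<lambda>r. r^(n-1) * (Lp r - V r + U r)^2)
          + r0 * integral {0..R} (\<lambda>r. r^(n-1) * (\<phi> (U r) / sqrt (\<psi> (U r)) * U1 r - sqrt (\<psi> (U r)) * V1 r)^2)
          + integral {0..R} (\<lambda>r. r^(n-1) * (V r)^2) + 1)"
      by (rule oneD[OF n3 r0 cU cU1 cV cV1 cV2 cLp Upos dU dV1 Lprel cphi cbeta beta_pos psi_def Hp(1) Hp(2) cG gamma(1) gam' HG psi_G b L])
    have ux: "u x = U (norm x)" if "norm x \<le> R" for x unfolding U_def by (rule radial_eq[OF radu e that])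
    have vx: "v x = V (norm x)" if "norm x \<le> R" for x unfolding V_def by (rule radial_eq[OF radv e that])
    have R0: "0 \<le> R" "R \<le> R" using R by auto
    have cV1sq: "continuous_on {0..R} (\<lambda>r. (V1 r)^2)" by (intro continuous_intros cV1)
    have hL: "integral (ball 0 r0) (\<lambda>x. (norm (dv x))\<^sup>2) = \<omega> * integral {0..r0} (\<lambda>r. r^(n-1) * (V1 r)^2)"
      unfolding \<omega>_def n_def
    proof (rule conv[OF cV1sq])
      show "0 \<le> r0" "r0 \<le> R" using r0 by auto
      fix x :: 'a assume x: "x \<in> ball 0 r0" "x \<noteq> 0"
      then have xR: "norm x < R" using r0 by simp
      have "dv x = V1 (norm x) *\<^sub>R sgn x" unfolding V1_def by (rule radial_grad[OF C1v radv e x(2) xR])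
      then show "(norm (dv x))\<^sup>2 = (V1 (norm x))\<^sup>2" using x(2) by (simp add: norm_sgn)
    qed
    have hG: "integral (ball 0 R) (\<lambda>x. G (u x)) = \<omega> * integral {0..R} (\<lambda>r. r^(n-1) * G (U r))"
      unfolding \<omega>_def n_def by (rule conv[OF cG R0]) (simp add: ux)
    have cFsq: "continuous_on {0..R} (\<lambda>r. (Lp r - V r + U r)^2)" by (intro continuous_intros cLp cV cU)
    have hF: "integral (ball 0 R) (\<lambda>x. (laplacian hv x - v x + u x)\<^sup>2) = \<omega> * integral {0..R} (\<lambda>r. r^(n-1) * (Lp r - V r + U r)^2)"
      unfolding \<omega>_def n_def
    proof (rule conv[OF cFsq R0])
      fix x :: 'a assume x: "x \<in> ball 0 R" "x \<noteq> 0"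
      then have xR: "norm x < R" by simp
      have "norm x \<in> {0<..<R}" using x xR by simp
      then have "Lp (norm x) = laplacian hv x" using Lprel lapx[OF x(2) xR] by simp
      then show "(laplacian hv x - v x + u x)\<^sup>2 = (Lp (norm x) - V (norm x) + U (norm x))\<^sup>2"
        using ux vx xR by simp
    qed
    have Uimg: "U ` {0..R} \<subseteq> {0..}" using Upos by (auto simp: less_imp_le)
    have cphiU: "continuous_on {0..R} (\<lambda>r. \<phi> (U r))" by (rule continuous_on_compose2[OF cphi cU Uimg])
    have cpsiU: "continuous_on {0..R} (\<lambda>r. \<psi> (U r))" by (rule continuous_on_compose2[OF cpsi cU Uimg])
    have psiUpos: "\<forall>r\<in>{0..R}. sqrt (\<psi> (U r)) \<noteq> 0" using psipos Upos by fastforce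
    have cgsq: "continuous_on {0..R} (\<lambda>r. (\<phi> (U r) / sqrt (\<psi> (U r)) * U1 r - sqrt (\<psi> (U r)) * V1 r)^2)"
      by (intro continuous_intros cphiU cpsiU cU1 cV1 psiUpos)
    have hg: "integral (ball 0 R) (\<lambda>x. (norm ((\<phi> (u x) / sqrt (\<psi> (u x))) *\<^sub>R du x - sqrt (\<psi> (u x)) *\<^sub>R dv x))\<^sup>2)
       = \<omega> * integral {0..R} (\<lambda>r. r^(n-1) * (\<phi> (U r) / sqrt (\<psi> (U r)) * U1 r - sqrt (\<psi> (U r)) * V1 r)^2)"
      unfolding \<omega>_def n_def
    proof (rule conv[OF cgsq R0])
      fix x :: 'a assume x: "x \<in> ball 0 R" "x \<noteq> 0"
      then have xR: "norm x < R" by simp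
      have du: "du x = U1 (norm x) *\<^sub>R sgn x" unfolding U1_def by (rule radial_grad[OF C1u radu e x(2) xR])
      have dv: "dv x = V1 (norm x) *\<^sub>R sgn x" unfolding V1_def by (rule radial_grad[OF C1v radv e x(2) xR])
      define A where "A = \<phi> (U (norm x)) / sqrt (\<psi> (U (norm x)))"
      define S where "S = sqrt (\<psi> (U (norm x)))"
      have "(\<phi> (u x) / sqrt (\<psi> (u x))) *\<^sub>R du x - sqrt (\<psi> (u x)) *\<^sub>R dv x
          = A *\<^sub>R (U1 (norm x) *\<^sub>R sgn x) - S *\<^sub>R (V1 (norm x) *\<^sub>R sgn x)"
        unfolding A_def S_def du dv using ux xR by simp
      also have "\<dots> = (A * U1 (norm x) - S * V1 (norm x)) *\<^sub>R sgn x"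
        by (simp add: scaleR_left_diff_distrib)
      finally have eq: "(\<phi> (u x) / sqrt (\<psi> (u x))) *\<^sub>R du x - sqrt (\<psi> (u x)) *\<^sub>R dv x
          = (A * U1 (norm x) - S * V1 (norm x)) *\<^sub>R sgn x" .
      show "(norm ((\<phi> (u x) / sqrt (\<psi> (u x))) *\<^sub>R du x - sqrt (\<psi> (u x)) *\<^sub>R dv x))\<^sup>2
          = (\<phi> (U (norm x)) / sqrt (\<psi> (U (norm x))) * U1 (norm x) - sqrt (\<psi> (U (norm x))) * V1 (norm x))\<^sup>2"
        unfolding eq A_def S_def using x(2) by (simp add: norm_sgn)
    qed
    have cVsq: "continuous_on {0..R} (\<lambda>r. (V r)^2)" by (intro continuous_intros cV)
    have hV: "integral (ball 0 R) (\<lambda>x. (v x)\<^sup>2) = \<omega> * integral {0..R} (\<lambda>r. r^(n-1) * (V r)^2)"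
      unfolding \<omega>_def n_def by (rule conv[OF cVsq R0]) (simp add: vx)
    have hm: "m = \<omega> * integral {0..R} (\<lambda>r. r^(n-1) * U r)"
      unfolding um[symmetric] \<omega>_def n_def by (rule conv[OF cU R0]) (simp add: ux)
    have Mu: "integral {0..R} (\<lambda>r. r^(n-1) * U r) = m / \<omega>" using hm \<omega>pos by simp
    define I1 where "I1 = integral {0..r0} (\<lambda>r. r^(n-1) * (V1 r)^2)"
    define JG where "JG = integral {0..R} (\<lambda>r. r^(n-1) * G (U r))"
    define JF where "JF = integral {0..R} (\<lambda>r. r^(n-1) * (Lp r - V r + U r)^2)"
    define Jg where "Jg = integral {0..R} (\<lambda>r. r^(n-1) * (\<phi> (U r) / sqrt (\<psi> (U r)) * U1 r - sqrt (\<psi> (U r)) * V1 r)^2)"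
    define JV where "JV = integral {0..R} (\<lambda>r. r^(n-1) * (V r)^2)"
    have one': "I1 \<le> \<mu> * JG + C1 * (r0 * JF + r0 * Jg + JV + 1)"
      using one unfolding Mu I1_def JG_def JF_def Jg_def JV_def \<mu>_def C1_def W1_def .
    have nn: "integral {0..R} (\<lambda>r. r^(n-1) * h r) \<ge> 0" if "continuous_on {0..R} h" "\<forall>r\<in>{0..R}. h r \<ge> 0"
      for h :: "real \<Rightarrow> real"
      by (rule integral_nonneg) (use that in \<open>auto intro!: integrable_continuous_interval continuous_intros\<close>)
    have JFnn: "JF \<ge> 0" unfolding JF_def by (rule nn[OF cFsq]) simp
    have Jgnn: "Jg \<ge> 0" unfolding Jg_def by (rule nn[OF cgsq]) simp
    have JVnn: "JV \<ge> 0" unfolding JV_def by (rule nn[OF cVsq]) simp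
    define S where "S = r0 * JF + r0 * Jg + JV"
    have Snn: "S \<ge> 0" unfolding S_def using JFnn Jgnn JVnn r0 by simp
    have C1nn: "C1 \<ge> 0" using C1ge by simp
    have "\<omega> * I1 \<le> \<omega> * (\<mu> * JG + C1 * (S + 1))" using one' \<omega>pos unfolding S_def by simp
    also have "\<dots> = \<mu> * (\<omega> * JG) + C1 * (\<omega> * S + \<omega>)" by (simp add: algebra_simps)
    also have "\<dots> \<le> \<mu> * (\<omega> * JG) + C1 * (max 1 \<omega> * (\<omega> * S + 1))"
    proof -
      have wS: "\<omega> * S \<ge> 0" using Snn \<omega>pos by simp
      have "1 * (\<omega> * S) \<le> max 1 \<omega> * (\<omega> * S)" by (rule mult_right_mono[OF _ wS]) simp
      then have a: "\<omega> * S \<le> max 1 \<omega> * (\<omega> * S)" by simp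
      have "\<omega> * S + \<omega> \<le> max 1 \<omega> * (\<omega> * S + 1)" using a by (simp add: distrib_left)
      then show ?thesis using C1nn by (simp add: mult_left_mono)
    qed
    finally have fin: "\<omega> * I1 \<le> \<mu> * (\<omega> * JG) + C1 * max 1 \<omega> * (r0 * (\<omega> * JF) + r0 * (\<omega> * Jg) + \<omega> * JV + 1)"
      unfolding S_def by (simp add: algebra_simps)
    show ?thesis unfolding hL hG hF hg hV using fin unfolding I1_def JG_def JF_def Jg_def JV_def .
    qed
    qed
  qed
qed

end
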